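(* For each of the equations $Q(x,u,v,y;\alpha,\beta)=0$ listed in the context, with the corresponding polynomial $h$, consider the system of differential equations for functions $x(\xi),u(\xi),v(\xi),y(\xi)$: $$x_\xi u_\xi=h(x,u;\alpha),\quad u_\xi y_\xi=h(u,y;\beta),\quad x_\xi v_\xi=h(x,v;\beta),\quad v_\xi y_\xi=h(v,y;\alpha).$$ Then (i) the equation $Q(x,u,v,y;\alpha,\beta)=0$ is a sufficient condition for the consistency condition $h(x,u;\alpha)h(v,y;\alpha)=h(x,v;\beta)h(u,y;\beta)$ of this system; (ii) $Q=0$ is compatible with the system, i.e. $\big(Q_xx_\xi+Q_uu_\xi+Q_vv_\xi+Q_yy_\xi\big)\big|_{Q=0}=0$ along solutions of the system.
   Context: The equations and polynomials $h$ (with constant $\delta$): (Q1) $\alpha(x-v)(u-y)-\beta(x-u)(v-y)+\delta^2\alpha\beta(\alpha-\beta)=0$, $h=\frac{1}{2\alpha}(x-u)^2-\frac{\delta^2\alpha}{2}$; (Q2) $\alpha(x-v)(u-y)-\beta(x-u)(v-y)+\alpha\beta(\alpha-\beta)(x+u+v+y)-\alpha\beta(\alpha-\beta)(\alpha^2-\alpha\beta+\beta^2)=0$, $h=\frac{1}{4\alpha}(x-u)^2-\frac\alpha2(x+u)+\frac{\alpha^3}{4}$; (Q3) $(\beta^2-\alpha^2)(xy+uv)+\beta(\alpha^2-1)(xu+vy)-\alpha(\beta^2-1)(xv+uy)-\delta^2(\alpha^2-\beta^2)(\alpha^2-1)(\beta^2-1)/(4\alpha\beta)=0$, $h=\frac{\alpha}{1-\alpha^2}(x^2+u^2)-\frac{1+\alpha^2}{1-\alpha^2}xu+\delta^2\frac{1-\alpha^2}{4\alpha}$;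 (Q4) $a_0xuvy+a_1(xuv+uvy+vyx+yxu)+a_2(xy+uv)+\bar a_2(xu+vy)+\tilde a_2(xv+uy)+a_3(x+u+v+y)+a_4=0$ with $r(t)=4t^3-g_2t-g_3$, $a^2=r(\alpha)$, $b^2=r(\beta)$, $a_0=a+b$, $a_1=-\beta a-\alpha b$, $a_2=\beta^2a+\alpha^2b$, $\bar a_2=\frac{ab(a+b)}{2(\alpha-\beta)}+\beta^2a-(2\alpha^2-\frac{g_2}{4})b$, $\tilde a_2=\frac{ab(a+b)}{2(\beta-\alpha)}+\alpha^2b-(2\beta^2-\frac{g_2}{4})a$, $a_3=\frac{g_3}{2}a_0-\frac{g_2}{4}a_1$, $a_4=\frac{g_2^2}{16}a_0-g_3a_1$; $h(x,u;\alpha)=\frac1a\big[(xu+\alpha(x+u)+g_2/4)^2-(x+u+\alpha)(4\alpha xu-g_3)\big]$ (and $h(\cdot,\cdot;\beta)$ uses $b$ in place of $a$); (H2) $(x-y)(u-v)+(\beta-\alpha)(x+u+v+y)+\beta^2-\alpha^2=0$, $h=x+u+\alpha$; (H3) with $\delta\neq0$: $\alpha(xu+vy)-\beta(xv+uy)+\delta(\alpha^2-\beta^2)=0$, $h=xu+\delta\alpha$; (A1) $\alpha(x+v)(u+y)-\beta(x+u)(v+y)-\delta^2\alpha\beta(\alpha-\beta)=0$, $h=\frac{1}{2\alpha}(x+u)^2-\frac{\delta^2\alpha}{2}$; (A2) $(\beta^2-\alpha^2)(xuvy+1)+\beta(\alpha^2-1)(xv+uy)-\alpha(\beta^2-1)(xu+vy)=0$,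 $h=\frac{\alpha}{1-\alpha^2}(x^2u^2+1)-\frac{1+\alpha^2}{1-\alpha^2}xu$. Subscripts denote derivatives. *)

theory Defs
  imports "HOL-Analysis.Analysis"
begin

datatype quad_eq = Q1 | Q2 | Q3 | Q4 | H2 | H3 | A1 | A2

text \<open>Coefficients of Q4; a and b are the chosen square roots a^2 = r(alpha), b^2 = r(beta).\<close>
definition r_Q4 :: "'a::field \<Rightarrow> 'a \<Rightarrow> 'a \<Rightarrow> 'a" where
  "r_Q4 g2 g3 t = 4 * t ^ 3 - g2 * t - g3"

fun quadQ :: "quad_eq \<Rightarrow> 'a::field \<Rightarrow> 'a \<Rightarrow> 'a \<Rightarrow> 'a \<Rightarrow> 'a \<Rightarrow> 'a \<Rightarrow> 'a
               \<Rightarrow> 'a \<Rightarrow> 'a \<Rightarrow> 'a \<Rightarrow> 'a \<Rightarrow> 'a" where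
  "quadQ Q1 \<delta> g2 g3 a b \<alpha> \<beta> x u v y =
     \<alpha> * (x - v) * (u - y) - \<beta> * (x - u) * (v - y) + \<delta>^2 * \<alpha> * \<beta> * (\<alpha> - \<beta>)"
| "quadQ Q2 \<delta> g2 g3 a b \<alpha> \<beta> x u v y =
     \<alpha> * (x - v) * (u - y) - \<beta> * (x - u) * (v - y) + \<alpha> * \<beta> * (\<alpha> - \<beta>) * (x + u + v + y)
     - \<alpha> * \<beta> * (\<alpha> - \<beta>) * (\<alpha>^2 - \<alpha> * \<beta> + \<beta>^2)"
| "quadQ Q3 \<delta> g2 g3 a b \<alpha> \<beta> x u v y =
     (\<beta>^2 - \<alpha>^2) * (x * y + u * v) + \<beta> * (\<alpha>^2 - 1) * (x * u + v * y)
     - \<alpha> * (\<beta>^2 - 1) * (x * v + u * y)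
     - \<delta>^2 * (\<alpha>^2 - \<beta>^2) * (\<alpha>^2 - 1) * (\<beta>^2 - 1) / (4 * \<alpha> * \<beta>)"
| "quadQ Q4 \<delta> g2 g3 a b \<alpha> \<beta> x u v y =
     (let a0 = a + b;
          a1 = - \<beta> * a - \<alpha> * b;
          a2 = \<beta>^2 * a + \<alpha>^2 * b;
          a2' = a * b * (a + b) / (2 * (\<alpha> - \<beta>)) + \<beta>^2 * a - (2 * \<alpha>^2 - g2 / 4) * b;
          a2'' = a * b * (a + b) / (2 * (\<beta> - \<alpha>)) + \<alpha>^2 * b - (2 * \<beta>^2 - g2 / 4) * a;
          a3 = g3 / 2 * a0 - g2 / 4 * a1;
          a4 = g2^2 / 16 * a0 - g3 * a1
      in a0 * x * u * v * y + a1 * (x * u * v + u * v * y + v * y * x + y * x * u)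
         + a2 * (x * y + u * v) + a2' * (x * u + v * y) + a2'' * (x * v + u * y)
         + a3 * (x + u + v + y) + a4)"
| "quadQ H2 \<delta> g2 g3 a b \<alpha> \<beta> x u v y =
     (x - y) * (u - v) + (\<beta> - \<alpha>) * (x + u + v + y) + \<beta>^2 - \<alpha>^2"
| "quadQ H3 \<delta> g2 g3 a b \<alpha> \<beta> x u v y =
     \<alpha> * (x * u + v * y) - \<beta> * (x * v + u * y) + \<delta> * (\<alpha>^2 - \<beta>^2)"
| "quadQ A1 \<delta> g2 g3 a b \<alpha> \<beta> x u v y =
     \<alpha> * (x + v) * (u + y) - \<beta> * (x + u) * (v + y) - \<delta>^2 * \<alpha> * \<beta> * (\<alpha> - \<beta>)"
| "quadQ A2 \<delta> g2 g3 a b \<alpha> \<beta> x u v y =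
     (\<beta>^2 - \<alpha>^2) * (x * u * v * y + 1) + \<beta> * (\<alpha>^2 - 1) * (x * v + u * y)
     - \<alpha> * (\<beta>^2 - 1) * (x * u + v * y)"

text \<open>quadh E delta g2 g3 s x u alpha  is  h(x,u;alpha); for Q4, s is the square root
  belonging to the lattice parameter (s = a for alpha, s = b for beta); otherwise s is ignored.\<close>
fun quadh :: "quad_eq \<Rightarrow> 'a::field \<Rightarrow> 'a \<Rightarrow> 'a \<Rightarrow> 'a \<Rightarrow> 'a \<Rightarrow> 'a \<Rightarrow> 'a \<Rightarrow> 'a" where
  "quadh Q1 \<delta> g2 g3 s x u \<alpha> = (x - u)^2 / (2 * \<alpha>) - \<delta>^2 * \<alpha> / 2"
| "quadh Q2 \<delta> g2 g3 s x u \<alpha> = (x - u)^2 / (4 * \<alpha>) - \<alpha> / 2 * (x + u) + \<alpha>^3 / 4"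
| "quadh Q3 \<delta> g2 g3 s x u \<alpha> =
     \<alpha> / (1 - \<alpha>^2) * (x^2 + u^2) - (1 + \<alpha>^2) / (1 - \<alpha>^2) * x * u + \<delta>^2 * (1 - \<alpha>^2) / (4 * \<alpha>)"
| "quadh Q4 \<delta> g2 g3 s x u \<alpha> =
     ((x * u + \<alpha> * (x + u) + g2 / 4)^2 - (x + u + \<alpha>) * (4 * \<alpha> * x * u - g3)) / s"
| "quadh H2 \<delta> g2 g3 s x u \<alpha> = x + u + \<alpha>"
| "quadh H3 \<delta> g2 g3 s x u \<alpha> = x * u + \<delta> * \<alpha>"
| "quadh A1 \<delta> g2 g3 s x u \<alpha> = (x + u)^2 / (2 * \<alpha>) - \<delta>^2 * \<alpha> / 2"
| "quadh A2 \<delta> g2 g3 s x u \<alpha> =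
     \<alpha> / (1 - \<alpha>^2) * (x^2 * u^2 + 1) - (1 + \<alpha>^2) / (1 - \<alpha>^2) * x * u"

text \<open>Standing non-degeneracy conditions: all denominators occurring in Q and h are nonzero,
  delta is nonzero for H3, and for Q4 a, b are square roots of r(alpha), r(beta).\<close>
fun quad_admissible :: "quad_eq \<Rightarrow> 'a::field \<Rightarrow> 'a \<Rightarrow> 'a \<Rightarrow> 'a \<Rightarrow> 'a \<Rightarrow> 'a \<Rightarrow> 'a \<Rightarrow> bool" where
  "quad_admissible Q1 \<delta> g2 g3 a b \<alpha> \<beta> = (\<alpha> \<noteq> 0 \<and> \<beta> \<noteq> 0)"
| "quad_admissible Q2 \<delta> g2 g3 a b \<alpha> \<beta> = (\<alpha> \<noteq> 0 \<and> \<beta> \<noteq> 0)"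
| "quad_admissible Q3 \<delta> g2 g3 a b \<alpha> \<beta> = (\<alpha> \<noteq> 0 \<and> \<beta> \<noteq> 0 \<and> \<alpha>^2 \<noteq> 1 \<and> \<beta>^2 \<noteq> 1)"
| "quad_admissible Q4 \<delta> g2 g3 a b \<alpha> \<beta> =
     (a^2 = r_Q4 g2 g3 \<alpha> \<and> b^2 = r_Q4 g2 g3 \<beta> \<and> a \<noteq> 0 \<and> b \<noteq> 0 \<and> \<alpha> \<noteq> \<beta>)"
| "quad_admissible H2 \<delta> g2 g3 a b \<alpha> \<beta> = True"
| "quad_admissible H3 \<delta> g2 g3 a b \<alpha> \<beta> = (\<delta> \<noteq> 0)"
| "quad_admissible A1 \<delta> g2 g3 a b \<alpha> \<beta> = (\<alpha> \<noteq> 0 \<and> \<beta> \<noteq> 0)"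
| "quad_admissible A2 \<delta> g2 g3 a b \<alpha> \<beta> = (\<alpha>^2 \<noteq> 1 \<and> \<beta>^2 \<noteq> 1)"

end

theory Submission
  imports Defs
begin

lemma G_I:
  fixes n1 :: "'a::field"
  assumes "d1 \<noteq> 0" "d3 \<noteq> 0" "n1*n2*d3*d3 - n3*n4*d1*d1 = q*R" "q = 0"
  shows "n1/d1 * (n2/d1) = n3/d3 * (n4/d3)"
proof -
  have "n1*n2*(d3*d3) = n3*n4*(d1*d1)" using assms(3,4) by (simp add: algebra_simps)
  then show ?thesis using assms(1,2) by (simp add: field_simps)
qed

lemma G_M:
  fixes n1 :: "'a::field"
  assumes "D \<noteq> 0" "d1 \<noteq> 0" "d4 \<noteq> 0" "(X1-X0)*n1*d4 + (Y1-Y0)*n4*d1 = q*M" "q = 0"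
  shows "(X1/D - X0/D) * (n1/d1) + (Y1/D - Y0/D) * (n4/d4) = 0"
proof -
  have e: "(X1-X0)*n1*d4 + (Y1-Y0)*n4*d1 = 0" using assms(4,5) by simp
  have "(X1/D - X0/D) * (n1/d1) + (Y1/D - Y0/D) * (n4/d4) = ((X1-X0)*n1*d4 + (Y1-Y0)*n4*d1) / (D*d1*d4)"
    using assms(1,2,3) by (simp add: field_simps)
  then show ?thesis using e by simp
qed
definition QN_Q1 :: "'a::field_char_0 \<Rightarrow> 'a \<Rightarrow> 'a \<Rightarrow> 'a \<Rightarrow> 'a \<Rightarrow> 'a \<Rightarrow> 'a \<Rightarrow> 'a" where
  "QN_Q1 \<delta> \<alpha> \<beta> x u v y = (x * u * \<alpha> - x * v * \<beta> - x * y * \<alpha> + x * y * \<beta> - u * v * \<alpha> + u * v * \<beta> - u * y * \<beta> + v * y * \<alpha> + \<alpha>^2 * \<beta> * \<delta>^2 - \<alpha> * \<beta>^2 * \<delta>^2)"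

definition HN_Q1 :: "'a::field_char_0 \<Rightarrow> 'a \<Rightarrow> 'a \<Rightarrow> 'a \<Rightarrow> 'a" where
  "HN_Q1 \<delta> p q A = (p-q)^2 - \<delta>^2*A^2"

definition HD_Q1 :: "'a::field_char_0 \<Rightarrow> 'a" where
  "HD_Q1 A = 2*A"

definition DD_Q1 :: "'a::field_char_0 \<Rightarrow> 'a \<Rightarrow> 'a" where
  "DD_Q1 \<alpha> \<beta> = 1"

lemma Q1_QE: "quadQ Q1 \<delta> g2 g3 a b \<alpha> \<beta> x u v y = QN_Q1 \<delta> \<alpha> \<beta> x u v y / DD_Q1 \<alpha> \<beta>"
  by (simp add: QN_Q1_def DD_Q1_def field_simps; algebra?)

lemma Q1_hE: "A \<noteq> 0 \<Longrightarrow> quadh Q1 \<delta> g2 g3 s p q A = HN_Q1 \<delta> p q A / HD_Q1 A"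
  by (simp add: HN_Q1_def HD_Q1_def field_simps power2_eq_square; algebra?)

lemma Q1_DD: "DD_Q1 \<alpha> \<beta> \<noteq> 0"
  by (simp add: DD_Q1_def)

lemma Q1_HD: "A \<noteq> 0 \<Longrightarrow> HD_Q1 A \<noteq> 0"
  by (simp add: HD_Q1_def)

lemma Q1_RI: "HN_Q1 \<delta> x u \<alpha> * HN_Q1 \<delta> v y \<alpha> * HD_Q1 \<beta> * HD_Q1 \<beta> - HN_Q1 \<delta> x v \<beta> * HN_Q1 \<delta> u y \<beta> * HD_Q1 \<alpha> * HD_Q1 \<alpha> = QN_Q1 \<delta> \<alpha> \<beta> x u v y * (0 - 4 * x * u * \<alpha> - 4 * x * v * \<beta> + 4 * x * y * \<alpha> + 4 * x * y * \<beta> + 4 * u * v * \<alpha> + 4 * u * v * \<beta> - 4 * u * y * \<beta> - 4 * v * y * \<alpha> + 4 * \<alpha>^2 * \<beta> * \<delta>^2 + 4 * \<alpha> * \<beta>^2 * \<delta>^2)"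
  unfolding QN_Q1_def HN_Q1_def HD_Q1_def by algebra

lemma Q1_RM: "(QN_Q1 \<delta> \<alpha> \<beta> 1 u v y - QN_Q1 \<delta> \<alpha> \<beta> 0 u v y) * HN_Q1 \<delta> x u \<alpha> * HD_Q1 \<beta> + (QN_Q1 \<delta> \<alpha> \<beta> x u v 1 - QN_Q1 \<delta> \<alpha> \<beta> x u v 0) * HN_Q1 \<delta> u y \<beta> * HD_Q1 \<alpha> = QN_Q1 \<delta> \<alpha> \<beta> x u v y * (2 * x * \<beta> - 2 * u * \<alpha> - 2 * u * \<beta> + 2 * y * \<alpha>)"
  unfolding QN_Q1_def HN_Q1_def HD_Q1_def by algebra

lemma Q1_RN: "(QN_Q1 \<delta> \<alpha> \<beta> x 1 v y - QN_Q1 \<delta> \<alpha> \<beta> x 0 v y) * HN_Q1 \<delta> x u \<alpha> * HD_Q1 \<beta> + (QN_Q1 \<delta> \<alpha> \<beta> x u 1 y - QN_Q1 \<delta> \<alpha> \<beta> x u 0 y) * HN_Q1 \<delta> x v \<beta> * HD_Q1 \<alpha> = QN_Q1 \<delta> \<alpha> \<beta> x u v y * (0 - 2 * x * \<alpha> - 2 * x * \<beta> + 2 * u * \<beta> + 2 * v * \<alpha>)"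
  unfolding QN_Q1_def HN_Q1_def HD_Q1_def by algebra

definition QN_Q2 :: "'a::field_char_0 \<Rightarrow> 'a \<Rightarrow> 'a \<Rightarrow> 'a \<Rightarrow> 'a \<Rightarrow> 'a \<Rightarrow> 'a \<Rightarrow> 'a" where
  "QN_Q2 \<delta> \<alpha> \<beta> x u v y = (x * u * \<alpha> - x * v * \<beta> - x * y * \<alpha> + x * y * \<beta> + x * \<alpha>^2 * \<beta> - x * \<alpha> * \<beta>^2 - u * v * \<alpha> + u * v * \<beta> - u * y * \<beta> + u * \<alpha>^2 * \<beta> - u * \<alpha> * \<beta>^2 + v * y * \<alpha> + v * \<alpha>^2 * \<beta> - v * \<alpha> * \<beta>^2 + y * \<alpha>^2 * \<beta> - y * \<alpha> * \<beta>^2 - \<alpha>^4 * \<beta> + 2 * \<alpha>^3 * \<beta>^2 - 2 * \<alpha>^2 * \<beta>^3 + \<alpha> * \<beta>^4)"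

definition HN_Q2 :: "'a::field_char_0 \<Rightarrow> 'a \<Rightarrow> 'a \<Rightarrow> 'a \<Rightarrow> 'a" where
  "HN_Q2 \<delta> p q A = (p-q)^2 - 2*A^2*(p+q) + A^4"

definition HD_Q2 :: "'a::field_char_0 \<Rightarrow> 'a" where
  "HD_Q2 A = 4*A"

definition DD_Q2 :: "'a::field_char_0 \<Rightarrow> 'a \<Rightarrow> 'a" where
  "DD_Q2 \<alpha> \<beta> = 1"

lemma Q2_QE: "quadQ Q2 \<delta> g2 g3 a b \<alpha> \<beta> x u v y = QN_Q2 \<delta> \<alpha> \<beta> x u v y / DD_Q2 \<alpha> \<beta>"
  by (simp add: QN_Q2_def DD_Q2_def field_simps; algebra?)

lemma Q2_hE: "A \<noteq> 0 \<Longrightarrow> quadh Q2 \<delta> g2 g3 s p q A = HN_Q2 \<delta> p q A / HD_Q2 A"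
  by (simp add: HN_Q2_def HD_Q2_def field_simps power2_eq_square; algebra?)

lemma Q2_DD: "DD_Q2 \<alpha> \<beta> \<noteq> 0"
  by (simp add: DD_Q2_def)

lemma Q2_HD: "A \<noteq> 0 \<Longrightarrow> HD_Q2 A \<noteq> 0"
  by (simp add: HD_Q2_def)

lemma Q2_RI: "HN_Q2 \<delta> x u \<alpha> * HN_Q2 \<delta> v y \<alpha> * HD_Q2 \<beta> * HD_Q2 \<beta> - HN_Q2 \<delta> x v \<beta> * HN_Q2 \<delta> u y \<beta> * HD_Q2 \<alpha> * HD_Q2 \<alpha> = QN_Q2 \<delta> \<alpha> \<beta> x u v y * (0 - 16 * x * u * \<alpha> - 16 * x * v * \<beta> + 16 * x * y * \<alpha> + 16 * x * y * \<beta> + 16 * x * \<alpha>^2 * \<beta> + 16 * x * \<alpha> * \<beta>^2 + 16 * u * v * \<alpha> + 16 * u * v * \<beta> - 16 * u * y * \<beta> + 16 * u * \<alpha>^2 * \<beta> + 16 * u * \<alpha> * \<beta>^2 - 16 * v * y * \<alpha> + 16 * v * \<alpha>^2 * \<beta> + 16 * v * \<alpha> * \<beta>^2 + 16 * y * \<alpha>^2 * \<beta> + 16 * y * \<alpha> * \<beta>^2 - 16 * \<alpha>^4 * \<beta> - 32 * \<alpha>^3 * \<beta>^2 - 32 * \<alpha>^2 * \<beta>^3 - 16 * \<alpha> * \<beta>^4)"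
  unfolding QN_Q2_def HN_Q2_def HD_Q2_def by algebra

lemma Q2_RM: "(QN_Q2 \<delta> \<alpha> \<beta> 1 u v y - QN_Q2 \<delta> \<alpha> \<beta> 0 u v y) * HN_Q2 \<delta> x u \<alpha> * HD_Q2 \<beta> + (QN_Q2 \<delta> \<alpha> \<beta> x u v 1 - QN_Q2 \<delta> \<alpha> \<beta> x u v 0) * HN_Q2 \<delta> u y \<beta> * HD_Q2 \<alpha> = QN_Q2 \<delta> \<alpha> \<beta> x u v y * (4 * x * \<beta> - 4 * u * \<alpha> - 4 * u * \<beta> + 4 * y * \<alpha> - 4 * \<alpha>^2 * \<beta> - 4 * \<alpha> * \<beta>^2)"
  unfolding QN_Q2_def HN_Q2_def HD_Q2_def by algebra

lemma Q2_RN: "(QN_Q2 \<delta> \<alpha> \<beta> x 1 v y - QN_Q2 \<delta> \<alpha> \<beta> x 0 v y) * HN_Q2 \<delta> x u \<alpha> * HD_Q2 \<beta> + (QN_Q2 \<delta> \<alpha> \<beta> x u 1 y - QN_Q2 \<delta> \<alpha> \<beta> x u 0 y) * HN_Q2 \<delta> x v \<beta> * HD_Q2 \<alpha> = QN_Q2 \<delta> \<alpha> \<beta> x u v y * (0 - 4 * x * \<alpha> - 4 * x * \<beta> + 4 * u * \<beta> + 4 * v * \<alpha> - 4 * \<alpha>^2 * \<beta> - 4 * \<alpha> * \<beta>^2)"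
  unfolding QN_Q2_def HN_Q2_def HD_Q2_def by algebra

definition QN_Q3 :: "'a::field_char_0 \<Rightarrow> 'a \<Rightarrow> 'a \<Rightarrow> 'a \<Rightarrow> 'a \<Rightarrow> 'a \<Rightarrow> 'a \<Rightarrow> 'a" where
  "QN_Q3 \<delta> \<alpha> \<beta> x u v y = (4 * x * u * \<alpha>^3 * \<beta>^2 - 4 * x * u * \<alpha> * \<beta>^2 - 4 * x * v * \<alpha>^2 * \<beta>^3 + 4 * x * v * \<alpha>^2 * \<beta> - 4 * x * y * \<alpha>^3 * \<beta> + 4 * x * y * \<alpha> * \<beta>^3 - 4 * u * v * \<alpha>^3 * \<beta> + 4 * u * v * \<alpha> * \<beta>^3 - 4 * u * y * \<alpha>^2 * \<beta>^3 + 4 * u * y * \<alpha>^2 * \<beta> + 4 * v * y * \<alpha>^3 * \<beta>^2 - 4 * v * y * \<alpha> * \<beta>^2 - \<alpha>^4 * \<beta>^2 * \<delta>^2 + \<alpha>^4 * \<delta>^2 + \<alpha>^2 * \<beta>^4 * \<delta>^2 - \<alpha>^2 * \<delta>^2 - \<beta>^4 * \<delta>^2 + \<beta>^2 * \<delta>^2)"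

definition HN_Q3 :: "'a::field_char_0 \<Rightarrow> 'a \<Rightarrow> 'a \<Rightarrow> 'a \<Rightarrow> 'a" where
  "HN_Q3 \<delta> p q A = 4*A^2*(p^2+q^2) - 4*A*(1+A^2)*p*q + \<delta>^2*(1-A^2)^2"

definition HD_Q3 :: "'a::field_char_0 \<Rightarrow> 'a" where
  "HD_Q3 A = 4*A*(1-A^2)"

definition DD_Q3 :: "'a::field_char_0 \<Rightarrow> 'a \<Rightarrow> 'a" where
  "DD_Q3 \<alpha> \<beta> = 4*\<alpha>*\<beta>"

lemma Q3_QE: "\<alpha> \<noteq> 0 \<Longrightarrow> \<beta> \<noteq> 0 \<Longrightarrow> quadQ Q3 \<delta> g2 g3 a b \<alpha> \<beta> x u v y = QN_Q3 \<delta> \<alpha> \<beta> x u v y / DD_Q3 \<alpha> \<beta>"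
  by (simp add: QN_Q3_def DD_Q3_def field_simps; algebra?)

lemma Q3_hE: "A \<noteq> 0 \<Longrightarrow> 1-A^2 \<noteq> 0 \<Longrightarrow> quadh Q3 \<delta> g2 g3 s p q A = HN_Q3 \<delta> p q A / HD_Q3 A"
proof -
  assume A: "A \<noteq> 0" "1-A^2 \<noteq> 0"
  obtain w where w: "w = 1 - A^2" by simp
  have w0: "w \<noteq> 0" using A w by simp
  have "quadh Q3 \<delta> g2 g3 s p q A = A/w*(p^2+q^2) - (1+A^2)/w*p*q + \<delta>^2*w/(4*A)" by (simp add: w)
  also have "\<dots> = (4*A^2*(p^2+q^2) - 4*A*(1+A^2)*p*q + \<delta>^2*w^2)/(4*A*w)" using w0 A(1) by (simp add: field_simps; algebra?)
  also have "\<dots> = HN_Q3 \<delta> p q A / HD_Q3 A" by (simp add: HN_Q3_def HD_Q3_def w)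
  finally show ?thesis .
qed

lemma Q3_DD: "\<alpha> \<noteq> 0 \<Longrightarrow> \<beta> \<noteq> 0 \<Longrightarrow> DD_Q3 \<alpha> \<beta> \<noteq> 0"
  by (simp add: DD_Q3_def)

lemma Q3_HD: "A \<noteq> 0 \<Longrightarrow> 1-A^2 \<noteq> 0 \<Longrightarrow> HD_Q3 A \<noteq> 0"
  by (simp add: HD_Q3_def)

lemma Q3_RI: "HN_Q3 \<delta> x u \<alpha> * HN_Q3 \<delta> v y \<alpha> * HD_Q3 \<beta> * HD_Q3 \<beta> - HN_Q3 \<delta> x v \<beta> * HN_Q3 \<delta> u y \<beta> * HD_Q3 \<alpha> * HD_Q3 \<alpha> = QN_Q3 \<delta> \<alpha> \<beta> x u v y * (0 - 64 * x * u * \<alpha>^3 * \<beta>^2 + 64 * x * u * \<alpha> * \<beta>^2 - 64 * x * v * \<alpha>^2 * \<beta>^3 + 64 * x * v * \<alpha>^2 * \<beta> + 64 * x * y * \<alpha>^3 * \<beta>^3 - 64 * x * y * \<alpha> * \<beta> + 64 * u * v * \<alpha>^3 * \<beta>^3 - 64 * u * v * \<alpha> * \<beta> - 64 * u * y * \<alpha>^2 * \<beta>^3 + 64 * u * y * \<alpha>^2 * \<beta> - 64 * v * y * \<alpha>^3 * \<beta>^2 + 64 * v * y * \<alpha> * \<beta>^2 - 16 * \<alpha>^4 * \<beta>^4 * \<delta>^2 + 16 * \<alpha>^4 * \<beta>^2 * \<delta>^2 + 16 * \<alpha>^2 * \<beta>^4 * \<delta>^2 - 16 * \<alpha>^2 *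 \<delta>^2 - 16 * \<beta>^2 * \<delta>^2 + 16 * \<delta>^2)"
  unfolding QN_Q3_def HN_Q3_def HD_Q3_def by algebra

lemma Q3_RM: "(QN_Q3 \<delta> \<alpha> \<beta> 1 u v y - QN_Q3 \<delta> \<alpha> \<beta> 0 u v y) * HN_Q3 \<delta> x u \<alpha> * HD_Q3 \<beta> + (QN_Q3 \<delta> \<alpha> \<beta> x u v 1 - QN_Q3 \<delta> \<alpha> \<beta> x u v 0) * HN_Q3 \<delta> u y \<beta> * HD_Q3 \<alpha> = QN_Q3 \<delta> \<alpha> \<beta> x u v y * (0 - 16 * x * \<alpha>^2 * \<beta>^3 + 16 * x * \<alpha>^2 * \<beta> + 16 * u * \<alpha>^3 * \<beta>^3 - 16 * u * \<alpha> * \<beta> - 16 * y * \<alpha>^3 * \<beta>^2 + 16 * y * \<alpha> * \<beta>^2)"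
  unfolding QN_Q3_def HN_Q3_def HD_Q3_def by algebra

lemma Q3_RN: "(QN_Q3 \<delta> \<alpha> \<beta> x 1 v y - QN_Q3 \<delta> \<alpha> \<beta> x 0 v y) * HN_Q3 \<delta> x u \<alpha> * HD_Q3 \<beta> + (QN_Q3 \<delta> \<alpha> \<beta> x u 1 y - QN_Q3 \<delta> \<alpha> \<beta> x u 0 y) * HN_Q3 \<delta> x v \<beta> * HD_Q3 \<alpha> = QN_Q3 \<delta> \<alpha> \<beta> x u v y * (16 * x * \<alpha>^3 * \<beta>^3 - 16 * x * \<alpha> * \<beta> - 16 * u * \<alpha>^2 * \<beta>^3 + 16 * u * \<alpha>^2 * \<beta> - 16 * v * \<alpha>^3 * \<beta>^2 + 16 * v * \<alpha> * \<beta>^2)"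
  unfolding QN_Q3_def HN_Q3_def HD_Q3_def by algebra

definition QN_H2 :: "'a::field_char_0 \<Rightarrow> 'a \<Rightarrow> 'a \<Rightarrow> 'a \<Rightarrow> 'a \<Rightarrow> 'a \<Rightarrow> 'a \<Rightarrow> 'a" where
  "QN_H2 \<delta> \<alpha> \<beta> x u v y = (x * u - x * v - x * \<alpha> + x * \<beta> - u * y - u * \<alpha> + u * \<beta> + v * y - v * \<alpha> + v * \<beta> - y * \<alpha> + y * \<beta> - \<alpha>^2 + \<beta>^2)"

definition HN_H2 :: "'a::field_char_0 \<Rightarrow> 'a \<Rightarrow> 'a \<Rightarrow> 'a \<Rightarrow> 'a" where
  "HN_H2 \<delta> p q A = p+q+A"

definition HD_H2 :: "'a::field_char_0 \<Rightarrow> 'a" where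
  "HD_H2 A = 1"

definition DD_H2 :: "'a::field_char_0 \<Rightarrow> 'a \<Rightarrow> 'a" where
  "DD_H2 \<alpha> \<beta> = 1"

lemma H2_QE: "quadQ H2 \<delta> g2 g3 a b \<alpha> \<beta> x u v y = QN_H2 \<delta> \<alpha> \<beta> x u v y / DD_H2 \<alpha> \<beta>"
  by (simp add: QN_H2_def DD_H2_def field_simps; algebra?)

lemma H2_hE: "quadh H2 \<delta> g2 g3 s p q A = HN_H2 \<delta> p q A / HD_H2 A"
  by (simp add: HN_H2_def HD_H2_def field_simps power2_eq_square; algebra?)

lemma H2_DD: "DD_H2 \<alpha> \<beta> \<noteq> 0"
  by (simp add: DD_H2_def)

lemma H2_HD: "HD_H2 A \<noteq> 0"
  by (simp add: HD_H2_def)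

lemma H2_RI: "HN_H2 \<delta> x u \<alpha> * HN_H2 \<delta> v y \<alpha> * HD_H2 \<beta> * HD_H2 \<beta> - HN_H2 \<delta> x v \<beta> * HN_H2 \<delta> u y \<beta> * HD_H2 \<alpha> * HD_H2 \<alpha> = QN_H2 \<delta> \<alpha> \<beta> x u v y * (0 - 1)"
  unfolding QN_H2_def HN_H2_def HD_H2_def by algebra

lemma H2_RM: "(QN_H2 \<delta> \<alpha> \<beta> 1 u v y - QN_H2 \<delta> \<alpha> \<beta> 0 u v y) * HN_H2 \<delta> x u \<alpha> * HD_H2 \<beta> + (QN_H2 \<delta> \<alpha> \<beta> x u v 1 - QN_H2 \<delta> \<alpha> \<beta> x u v 0) * HN_H2 \<delta> u y \<beta> * HD_H2 \<alpha> = QN_H2 \<delta> \<alpha> \<beta> x u v y * (1)"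
  unfolding QN_H2_def HN_H2_def HD_H2_def by algebra

lemma H2_RN: "(QN_H2 \<delta> \<alpha> \<beta> x 1 v y - QN_H2 \<delta> \<alpha> \<beta> x 0 v y) * HN_H2 \<delta> x u \<alpha> * HD_H2 \<beta> + (QN_H2 \<delta> \<alpha> \<beta> x u 1 y - QN_H2 \<delta> \<alpha> \<beta> x u 0 y) * HN_H2 \<delta> x v \<beta> * HD_H2 \<alpha> = QN_H2 \<delta> \<alpha> \<beta> x u v y * (1)"
  unfolding QN_H2_def HN_H2_def HD_H2_def by algebra

definition QN_H3 :: "'a::field_char_0 \<Rightarrow> 'a \<Rightarrow> 'a \<Rightarrow> 'a \<Rightarrow> 'a \<Rightarrow> 'a \<Rightarrow> 'a \<Rightarrow> 'a" where
  "QN_H3 \<delta> \<alpha> \<beta> x u v y = (x * u * \<alpha> - x * v * \<beta> - u * y * \<beta> + v * y * \<alpha> + \<alpha>^2 * \<delta> - \<beta>^2 * \<delta>)"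

definition HN_H3 :: "'a::field_char_0 \<Rightarrow> 'a \<Rightarrow> 'a \<Rightarrow> 'a \<Rightarrow> 'a" where
  "HN_H3 \<delta> p q A = p*q+\<delta>*A"

definition HD_H3 :: "'a::field_char_0 \<Rightarrow> 'a" where
  "HD_H3 A = 1"

definition DD_H3 :: "'a::field_char_0 \<Rightarrow> 'a \<Rightarrow> 'a" where
  "DD_H3 \<alpha> \<beta> = 1"

lemma H3_QE: "quadQ H3 \<delta> g2 g3 a b \<alpha> \<beta> x u v y = QN_H3 \<delta> \<alpha> \<beta> x u v y / DD_H3 \<alpha> \<beta>"
  by (simp add: QN_H3_def DD_H3_def field_simps; algebra?)

lemma H3_hE: "quadh H3 \<delta> g2 g3 s p q A = HN_H3 \<delta> p q A / HD_H3 A"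
  by (simp add: HN_H3_def HD_H3_def field_simps power2_eq_square; algebra?)

lemma H3_DD: "DD_H3 \<alpha> \<beta> \<noteq> 0"
  by (simp add: DD_H3_def)

lemma H3_HD: "HD_H3 A \<noteq> 0"
  by (simp add: HD_H3_def)

lemma H3_RI: "HN_H3 \<delta> x u \<alpha> * HN_H3 \<delta> v y \<alpha> * HD_H3 \<beta> * HD_H3 \<beta> - HN_H3 \<delta> x v \<beta> * HN_H3 \<delta> u y \<beta> * HD_H3 \<alpha> * HD_H3 \<alpha> = QN_H3 \<delta> \<alpha> \<beta> x u v y * (\<delta>)"
  unfolding QN_H3_def HN_H3_def HD_H3_def by algebra

lemma H3_RM: "(QN_H3 \<delta> \<alpha> \<beta> 1 u v y - QN_H3 \<delta> \<alpha> \<beta> 0 u v y) * HN_H3 \<delta> x u \<alpha> * HD_H3 \<beta> + (QN_H3 \<delta> \<alpha> \<beta> x u v 1 - QN_H3 \<delta> \<alpha> \<beta> x u v 0) * HN_H3 \<delta> u y \<beta> * HD_H3 \<alpha> = QN_H3 \<delta> \<alpha> \<beta> x u v y * (u)"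
  unfolding QN_H3_def HN_H3_def HD_H3_def by algebra

lemma H3_RN: "(QN_H3 \<delta> \<alpha> \<beta> x 1 v y - QN_H3 \<delta> \<alpha> \<beta> x 0 v y) * HN_H3 \<delta> x u \<alpha> * HD_H3 \<beta> + (QN_H3 \<delta> \<alpha> \<beta> x u 1 y - QN_H3 \<delta> \<alpha> \<beta> x u 0 y) * HN_H3 \<delta> x v \<beta> * HD_H3 \<alpha> = QN_H3 \<delta> \<alpha> \<beta> x u v y * (x)"
  unfolding QN_H3_def HN_H3_def HD_H3_def by algebra

definition QN_A1 :: "'a::field_char_0 \<Rightarrow> 'a \<Rightarrow> 'a \<Rightarrow> 'a \<Rightarrow> 'a \<Rightarrow> 'a \<Rightarrow> 'a \<Rightarrow> 'a" where
  "QN_A1 \<delta> \<alpha> \<beta> x u v y = (x * u * \<alpha> - x * v * \<beta> + x * y * \<alpha> - x * y * \<beta> + u * v * \<alpha> - u * v * \<beta> - u * y * \<beta> + v * y * \<alpha> - \<alpha>^2 * \<beta> * \<delta>^2 + \<alpha> * \<beta>^2 * \<delta>^2)"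

definition HN_A1 :: "'a::field_char_0 \<Rightarrow> 'a \<Rightarrow> 'a \<Rightarrow> 'a \<Rightarrow> 'a" where
  "HN_A1 \<delta> p q A = (p+q)^2 - \<delta>^2*A^2"

definition HD_A1 :: "'a::field_char_0 \<Rightarrow> 'a" where
  "HD_A1 A = 2*A"

definition DD_A1 :: "'a::field_char_0 \<Rightarrow> 'a \<Rightarrow> 'a" where
  "DD_A1 \<alpha> \<beta> = 1"

lemma A1_QE: "quadQ A1 \<delta> g2 g3 a b \<alpha> \<beta> x u v y = QN_A1 \<delta> \<alpha> \<beta> x u v y / DD_A1 \<alpha> \<beta>"
  by (simp add: QN_A1_def DD_A1_def field_simps; algebra?)

lemma A1_hE: "A \<noteq> 0 \<Longrightarrow> quadh A1 \<delta> g2 g3 s p q A = HN_A1 \<delta> p q A / HD_A1 A"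
  by (simp add: HN_A1_def HD_A1_def field_simps power2_eq_square; algebra?)

lemma A1_DD: "DD_A1 \<alpha> \<beta> \<noteq> 0"
  by (simp add: DD_A1_def)

lemma A1_HD: "A \<noteq> 0 \<Longrightarrow> HD_A1 A \<noteq> 0"
  by (simp add: HD_A1_def)

lemma A1_RI: "HN_A1 \<delta> x u \<alpha> * HN_A1 \<delta> v y \<alpha> * HD_A1 \<beta> * HD_A1 \<beta> - HN_A1 \<delta> x v \<beta> * HN_A1 \<delta> u y \<beta> * HD_A1 \<alpha> * HD_A1 \<alpha> = QN_A1 \<delta> \<alpha> \<beta> x u v y * (0 - 4 * x * u * \<alpha> - 4 * x * v * \<beta> - 4 * x * y * \<alpha> - 4 * x * y * \<beta> - 4 * u * v * \<alpha> - 4 * u * v * \<beta> - 4 * u * y * \<beta> - 4 * v * y * \<alpha> - 4 * \<alpha>^2 * \<beta> * \<delta>^2 - 4 * \<alpha> * \<beta>^2 * \<delta>^2)"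
  unfolding QN_A1_def HN_A1_def HD_A1_def by algebra

lemma A1_RM: "(QN_A1 \<delta> \<alpha> \<beta> 1 u v y - QN_A1 \<delta> \<alpha> \<beta> 0 u v y) * HN_A1 \<delta> x u \<alpha> * HD_A1 \<beta> + (QN_A1 \<delta> \<alpha> \<beta> x u v 1 - QN_A1 \<delta> \<alpha> \<beta> x u v 0) * HN_A1 \<delta> u y \<beta> * HD_A1 \<alpha> = QN_A1 \<delta> \<alpha> \<beta> x u v y * (2 * x * \<beta> + 2 * u * \<alpha> + 2 * u * \<beta> + 2 * y * \<alpha>)"
  unfolding QN_A1_def HN_A1_def HD_A1_def by algebra

lemma A1_RN: "(QN_A1 \<delta> \<alpha> \<beta> x 1 v y - QN_A1 \<delta> \<alpha> \<beta> x 0 v y) * HN_A1 \<delta> x u \<alpha> * HD_A1 \<beta> + (QN_A1 \<delta> \<alpha> \<beta> x u 1 y - QN_A1 \<delta> \<alpha> \<beta> x u 0 y) * HN_A1 \<delta> x v \<beta> * HD_A1 \<alpha> = QN_A1 \<delta> \<alpha> \<beta> x u v y * (2 * x * \<alpha> + 2 * x * \<beta> + 2 * u * \<beta> + 2 * v * \<alpha>)"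
  unfolding QN_A1_def HN_A1_def HD_A1_def by algebra

definition QN_A2 :: "'a::field_char_0 \<Rightarrow> 'a \<Rightarrow> 'a \<Rightarrow> 'a \<Rightarrow> 'a \<Rightarrow> 'a \<Rightarrow> 'a \<Rightarrow> 'a" where
  "QN_A2 \<delta> \<alpha> \<beta> x u v y = (0 - x * u * v * y * \<alpha>^2 + x * u * v * y * \<beta>^2 - x * u * \<alpha> * \<beta>^2 + x * u * \<alpha> + x * v * \<alpha>^2 * \<beta> - x * v * \<beta> + u * y * \<alpha>^2 * \<beta> - u * y * \<beta> - v * y * \<alpha> * \<beta>^2 + v * y * \<alpha> - \<alpha>^2 + \<beta>^2)"

definition HN_A2 :: "'a::field_char_0 \<Rightarrow> 'a \<Rightarrow> 'a \<Rightarrow> 'a \<Rightarrow> 'a" where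
  "HN_A2 \<delta> p q A = A*(p^2*q^2+1) - (1+A^2)*p*q"

definition HD_A2 :: "'a::field_char_0 \<Rightarrow> 'a" where
  "HD_A2 A = 1-A^2"

definition DD_A2 :: "'a::field_char_0 \<Rightarrow> 'a \<Rightarrow> 'a" where
  "DD_A2 \<alpha> \<beta> = 1"

lemma A2_QE: "quadQ A2 \<delta> g2 g3 a b \<alpha> \<beta> x u v y = QN_A2 \<delta> \<alpha> \<beta> x u v y / DD_A2 \<alpha> \<beta>"
  by (simp add: QN_A2_def DD_A2_def field_simps; algebra?)

lemma A2_hE: "1-A^2 \<noteq> 0 \<Longrightarrow> quadh A2 \<delta> g2 g3 s p q A = HN_A2 \<delta> p q A / HD_A2 A"
proof -
  assume A: "1-A^2 \<noteq> 0"
  obtain w where w: "w = 1 - A^2" by simp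
  have w0: "w \<noteq> 0" using A w by simp
  have "quadh A2 \<delta> g2 g3 s p q A = A/w*(p^2*q^2+1) - (1+A^2)/w*p*q" by (simp add: w)
  also have "\<dots> = (A*(p^2*q^2+1) - (1+A^2)*p*q)/w" using w0 by (simp add: field_simps)
  also have "\<dots> = HN_A2 \<delta> p q A / HD_A2 A" by (simp add: HN_A2_def HD_A2_def w)
  finally show ?thesis .
qed

lemma A2_DD: "DD_A2 \<alpha> \<beta> \<noteq> 0"
  by (simp add: DD_A2_def)

lemma A2_HD: "1-A^2 \<noteq> 0 \<Longrightarrow> HD_A2 A \<noteq> 0"
  by (simp add: HD_A2_def)

lemma A2_RI: "HN_A2 \<delta> x u \<alpha> * HN_A2 \<delta> v y \<alpha> * HD_A2 \<beta> * HD_A2 \<beta> - HN_A2 \<delta> x v \<beta> * HN_A2 \<delta> u y \<beta> * HD_A2 \<alpha> * HD_A2 \<alpha> = QN_A2 \<delta> \<alpha> \<beta> x u v y * (x * u * v * y * \<alpha>^2 * \<beta>^2 - x * u * v * y - x * u * \<alpha> * \<beta>^2 + x * u * \<alpha> - x * v * \<alpha>^2 * \<beta> + x * v * \<beta> - u * y * \<alpha>^2 * \<beta> + u * y * \<beta> - v * y * \<alpha> * \<beta>^2 + v * y * \<alpha> + \<alpha>^2 * \<beta>^2 - 1)"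
  unfolding QN_A2_def HN_A2_def HD_A2_def by algebra

lemma A2_RM: "(QN_A2 \<delta> \<alpha> \<beta> 1 u v y - QN_A2 \<delta> \<alpha> \<beta> 0 u v y) * HN_A2 \<delta> x u \<alpha> * HD_A2 \<beta> + (QN_A2 \<delta> \<alpha> \<beta> x u v 1 - QN_A2 \<delta> \<alpha> \<beta> x u v 0) * HN_A2 \<delta> u y \<beta> * HD_A2 \<alpha> = QN_A2 \<delta> \<alpha> \<beta> x u v y * (0 - x * u^2 * \<alpha> * \<beta>^2 + x * u^2 * \<alpha> - u^2 * y * \<alpha>^2 * \<beta> + u^2 * y * \<beta> + u * \<alpha>^2 * \<beta>^2 - u)"
  unfolding QN_A2_def HN_A2_def HD_A2_def by algebra

lemma A2_RN: "(QN_A2 \<delta> \<alpha> \<beta> x 1 v y - QN_A2 \<delta> \<alpha> \<beta> x 0 v y) * HN_A2 \<delta> x u \<alpha> * HD_A2 \<beta> + (QN_A2 \<delta> \<alpha> \<beta> x u 1 y - QN_A2 \<delta> \<alpha> \<beta> x u 0 y) * HN_A2 \<delta> x v \<beta> * HD_A2 \<alpha> = QN_A2 \<delta> \<alpha> \<beta> x u v y * (0 - x^2 * u * \<alpha> * \<beta>^2 + x^2 * u * \<alpha> - x^2 * v * \<alpha>^2 * \<beta> + x^2 * v * \<beta> + x * \<alpha>^2 * \<beta>^2 - x)"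
  unfolding QN_A2_def HN_A2_def HD_A2_def by algebra
lemma Q1_fin:
  fixes x :: "'a::field_char_0"
  assumes c: "\<alpha> \<noteq> 0" "\<beta> \<noteq> 0" and qz: "quadQ Q1 \<delta> g2 g3 a b \<alpha> \<beta> x u v y = 0"
  shows "quadh Q1 \<delta> g2 g3 a x u \<alpha> * quadh Q1 \<delta> g2 g3 a v y \<alpha> = quadh Q1 \<delta> g2 g3 b x v \<beta> * quadh Q1 \<delta> g2 g3 b u y \<beta>"
    "(quadQ Q1 \<delta> g2 g3 a b \<alpha> \<beta> 1 u v y - quadQ Q1 \<delta> g2 g3 a b \<alpha> \<beta> 0 u v y) * quadh Q1 \<delta> g2 g3 a x u \<alpha> + (quadQ Q1 \<delta> g2 g3 a b \<alpha> \<beta> x u v 1 - quadQ Q1 \<delta> g2 g3 a b \<alpha> \<beta> x u v 0) * quadh Q1 \<delta> g2 g3 b u y \<beta> = 0"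
    "(quadQ Q1 \<delta> g2 g3 a b \<alpha> \<beta> x 1 v y - quadQ Q1 \<delta> g2 g3 a b \<alpha> \<beta> x 0 v y) * quadh Q1 \<delta> g2 g3 a x u \<alpha> + (quadQ Q1 \<delta> g2 g3 a b \<alpha> \<beta> x u 1 y - quadQ Q1 \<delta> g2 g3 a b \<alpha> \<beta> x u 0 y) * quadh Q1 \<delta> g2 g3 b x v \<beta> = 0"
proof -
  have d: "DD_Q1 \<alpha> \<beta> \<noteq> 0" using c by (simp add: DD_Q1_def)
  have hd: "HD_Q1 \<alpha> \<noteq> 0" "HD_Q1 \<beta> \<noteq> 0" using c by (simp_all add: HD_Q1_def)
  have qs: "\<And>x u v y. quadQ Q1 \<delta> g2 g3 a b \<alpha> \<beta> x u v y = QN_Q1 \<delta> \<alpha> \<beta> x u v y / DD_Q1 \<alpha> \<beta>"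
    by (rule Q1_QE; use c in simp)
  have hs1: "\<And>p q. quadh Q1 \<delta> g2 g3 a p q \<alpha> = HN_Q1 \<delta> p q \<alpha> / HD_Q1 \<alpha>"
    by (rule Q1_hE; use c in simp)
  have hs2: "\<And>p q. quadh Q1 \<delta> g2 g3 b p q \<beta> = HN_Q1 \<delta> p q \<beta> / HD_Q1 \<beta>"
    by (rule Q1_hE; use c in simp)
  note hs = hs1 hs2
  have qn: "QN_Q1 \<delta> \<alpha> \<beta> x u v y = 0" using qz d unfolding qs by simp
  show "quadh Q1 \<delta> g2 g3 a x u \<alpha> * quadh Q1 \<delta> g2 g3 a v y \<alpha> = quadh Q1 \<delta> g2 g3 b x v \<beta> * quadh Q1 \<delta> g2 g3 b u y \<beta>"
    unfolding hs by (rule G_I[OF hd(1) hd(2) Q1_RI qn])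
  show "(quadQ Q1 \<delta> g2 g3 a b \<alpha> \<beta> 1 u v y - quadQ Q1 \<delta> g2 g3 a b \<alpha> \<beta> 0 u v y) * quadh Q1 \<delta> g2 g3 a x u \<alpha> + (quadQ Q1 \<delta> g2 g3 a b \<alpha> \<beta> x u v 1 - quadQ Q1 \<delta> g2 g3 a b \<alpha> \<beta> x u v 0) * quadh Q1 \<delta> g2 g3 b u y \<beta> = 0"
    unfolding hs qs by (rule G_M[OF d hd(1) hd(2) Q1_RM qn])
  show "(quadQ Q1 \<delta> g2 g3 a b \<alpha> \<beta> x 1 v y - quadQ Q1 \<delta> g2 g3 a b \<alpha> \<beta> x 0 v y) * quadh Q1 \<delta> g2 g3 a x u \<alpha> + (quadQ Q1 \<delta> g2 g3 a b \<alpha> \<beta> x u 1 y - quadQ Q1 \<delta> g2 g3 a b \<alpha> \<beta> x u 0 y) * quadh Q1 \<delta> g2 g3 b x v \<beta> = 0"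
    unfolding hs qs by (rule G_M[OF d hd(1) hd(2) Q1_RN qn])
qed

lemma Q2_fin:
  fixes x :: "'a::field_char_0"
  assumes c: "\<alpha> \<noteq> 0" "\<beta> \<noteq> 0" and qz: "quadQ Q2 \<delta> g2 g3 a b \<alpha> \<beta> x u v y = 0"
  shows "quadh Q2 \<delta> g2 g3 a x u \<alpha> * quadh Q2 \<delta> g2 g3 a v y \<alpha> = quadh Q2 \<delta> g2 g3 b x v \<beta> * quadh Q2 \<delta> g2 g3 b u y \<beta>"
    "(quadQ Q2 \<delta> g2 g3 a b \<alpha> \<beta> 1 u v y - quadQ Q2 \<delta> g2 g3 a b \<alpha> \<beta> 0 u v y) * quadh Q2 \<delta> g2 g3 a x u \<alpha> + (quadQ Q2 \<delta> g2 g3 a b \<alpha> \<beta> x u v 1 - quadQ Q2 \<delta> g2 g3 a b \<alpha> \<beta> x u v 0) * quadh Q2 \<delta> g2 g3 b u y \<beta> = 0"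
    "(quadQ Q2 \<delta> g2 g3 a b \<alpha> \<beta> x 1 v y - quadQ Q2 \<delta> g2 g3 a b \<alpha> \<beta> x 0 v y) * quadh Q2 \<delta> g2 g3 a x u \<alpha> + (quadQ Q2 \<delta> g2 g3 a b \<alpha> \<beta> x u 1 y - quadQ Q2 \<delta> g2 g3 a b \<alpha> \<beta> x u 0 y) * quadh Q2 \<delta> g2 g3 b x v \<beta> = 0"
proof -
  have d: "DD_Q2 \<alpha> \<beta> \<noteq> 0" using c by (simp add: DD_Q2_def)
  have hd: "HD_Q2 \<alpha> \<noteq> 0" "HD_Q2 \<beta> \<noteq> 0" using c by (simp_all add: HD_Q2_def)
  have qs: "\<And>x u v y. quadQ Q2 \<delta> g2 g3 a b \<alpha> \<beta> x u v y = QN_Q2 \<delta> \<alpha> \<beta> x u v y / DD_Q2 \<alpha> \<beta>"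
    by (rule Q2_QE; use c in simp)
  have hs1: "\<And>p q. quadh Q2 \<delta> g2 g3 a p q \<alpha> = HN_Q2 \<delta> p q \<alpha> / HD_Q2 \<alpha>"
    by (rule Q2_hE; use c in simp)
  have hs2: "\<And>p q. quadh Q2 \<delta> g2 g3 b p q \<beta> = HN_Q2 \<delta> p q \<beta> / HD_Q2 \<beta>"
    by (rule Q2_hE; use c in simp)
  note hs = hs1 hs2
  have qn: "QN_Q2 \<delta> \<alpha> \<beta> x u v y = 0" using qz d unfolding qs by simp
  show "quadh Q2 \<delta> g2 g3 a x u \<alpha> * quadh Q2 \<delta> g2 g3 a v y \<alpha> = quadh Q2 \<delta> g2 g3 b x v \<beta> * quadh Q2 \<delta> g2 g3 b u y \<beta>"
    unfolding hs by (rule G_I[OF hd(1) hd(2) Q2_RI qn])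
  show "(quadQ Q2 \<delta> g2 g3 a b \<alpha> \<beta> 1 u v y - quadQ Q2 \<delta> g2 g3 a b \<alpha> \<beta> 0 u v y) * quadh Q2 \<delta> g2 g3 a x u \<alpha> + (quadQ Q2 \<delta> g2 g3 a b \<alpha> \<beta> x u v 1 - quadQ Q2 \<delta> g2 g3 a b \<alpha> \<beta> x u v 0) * quadh Q2 \<delta> g2 g3 b u y \<beta> = 0"
    unfolding hs qs by (rule G_M[OF d hd(1) hd(2) Q2_RM qn])
  show "(quadQ Q2 \<delta> g2 g3 a b \<alpha> \<beta> x 1 v y - quadQ Q2 \<delta> g2 g3 a b \<alpha> \<beta> x 0 v y) * quadh Q2 \<delta> g2 g3 a x u \<alpha> + (quadQ Q2 \<delta> g2 g3 a b \<alpha> \<beta> x u 1 y - quadQ Q2 \<delta> g2 g3 a b \<alpha> \<beta> x u 0 y) * quadh Q2 \<delta> g2 g3 b x v \<beta> = 0"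
    unfolding hs qs by (rule G_M[OF d hd(1) hd(2) Q2_RN qn])
qed

lemma Q3_fin:
  fixes x :: "'a::field_char_0"
  assumes c: "\<alpha> \<noteq> 0" "1-\<alpha>^2 \<noteq> 0" "\<beta> \<noteq> 0" "1-\<beta>^2 \<noteq> 0" and qz: "quadQ Q3 \<delta> g2 g3 a b \<alpha> \<beta> x u v y = 0"
  shows "quadh Q3 \<delta> g2 g3 a x u \<alpha> * quadh Q3 \<delta> g2 g3 a v y \<alpha> = quadh Q3 \<delta> g2 g3 b x v \<beta> * quadh Q3 \<delta> g2 g3 b u y \<beta>"
    "(quadQ Q3 \<delta> g2 g3 a b \<alpha> \<beta> 1 u v y - quadQ Q3 \<delta> g2 g3 a b \<alpha> \<beta> 0 u v y) * quadh Q3 \<delta> g2 g3 a x u \<alpha> + (quadQ Q3 \<delta> g2 g3 a b \<alpha> \<beta> x u v 1 - quadQ Q3 \<delta> g2 g3 a b \<alpha> \<beta> x u v 0) * quadh Q3 \<delta> g2 g3 b u y \<beta> = 0"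
    "(quadQ Q3 \<delta> g2 g3 a b \<alpha> \<beta> x 1 v y - quadQ Q3 \<delta> g2 g3 a b \<alpha> \<beta> x 0 v y) * quadh Q3 \<delta> g2 g3 a x u \<alpha> + (quadQ Q3 \<delta> g2 g3 a b \<alpha> \<beta> x u 1 y - quadQ Q3 \<delta> g2 g3 a b \<alpha> \<beta> x u 0 y) * quadh Q3 \<delta> g2 g3 b x v \<beta> = 0"
proof -
  have d: "DD_Q3 \<alpha> \<beta> \<noteq> 0" using c by (simp add: DD_Q3_def)
  have hd: "HD_Q3 \<alpha> \<noteq> 0" "HD_Q3 \<beta> \<noteq> 0" using c by (simp_all add: HD_Q3_def)
  have qs: "\<And>x u v y. quadQ Q3 \<delta> g2 g3 a b \<alpha> \<beta> x u v y = QN_Q3 \<delta> \<alpha> \<beta> x u v y / DD_Q3 \<alpha> \<beta>"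
    by (rule Q3_QE; use c in simp)
  have hs1: "\<And>p q. quadh Q3 \<delta> g2 g3 a p q \<alpha> = HN_Q3 \<delta> p q \<alpha> / HD_Q3 \<alpha>"
    by (rule Q3_hE; use c in simp)
  have hs2: "\<And>p q. quadh Q3 \<delta> g2 g3 b p q \<beta> = HN_Q3 \<delta> p q \<beta> / HD_Q3 \<beta>"
    by (rule Q3_hE; use c in simp)
  note hs = hs1 hs2
  have qn: "QN_Q3 \<delta> \<alpha> \<beta> x u v y = 0" using qz d unfolding qs by simp
  show "quadh Q3 \<delta> g2 g3 a x u \<alpha> * quadh Q3 \<delta> g2 g3 a v y \<alpha> = quadh Q3 \<delta> g2 g3 b x v \<beta> * quadh Q3 \<delta> g2 g3 b u y \<beta>"
    unfolding hs by (rule G_I[OF hd(1) hd(2) Q3_RI qn])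
  show "(quadQ Q3 \<delta> g2 g3 a b \<alpha> \<beta> 1 u v y - quadQ Q3 \<delta> g2 g3 a b \<alpha> \<beta> 0 u v y) * quadh Q3 \<delta> g2 g3 a x u \<alpha> + (quadQ Q3 \<delta> g2 g3 a b \<alpha> \<beta> x u v 1 - quadQ Q3 \<delta> g2 g3 a b \<alpha> \<beta> x u v 0) * quadh Q3 \<delta> g2 g3 b u y \<beta> = 0"
    unfolding hs qs by (rule G_M[OF d hd(1) hd(2) Q3_RM qn])
  show "(quadQ Q3 \<delta> g2 g3 a b \<alpha> \<beta> x 1 v y - quadQ Q3 \<delta> g2 g3 a b \<alpha> \<beta> x 0 v y) * quadh Q3 \<delta> g2 g3 a x u \<alpha> + (quadQ Q3 \<delta> g2 g3 a b \<alpha> \<beta> x u 1 y - quadQ Q3 \<delta> g2 g3 a b \<alpha> \<beta> x u 0 y) * quadh Q3 \<delta> g2 g3 b x v \<beta> = 0"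
    unfolding hs qs by (rule G_M[OF d hd(1) hd(2) Q3_RN qn])
qed

lemma H2_fin:
  fixes x :: "'a::field_char_0"
  assumes qz: "quadQ H2 \<delta> g2 g3 a b \<alpha> \<beta> x u v y = 0"
  shows "quadh H2 \<delta> g2 g3 a x u \<alpha> * quadh H2 \<delta> g2 g3 a v y \<alpha> = quadh H2 \<delta> g2 g3 b x v \<beta> * quadh H2 \<delta> g2 g3 b u y \<beta>"
    "(quadQ H2 \<delta> g2 g3 a b \<alpha> \<beta> 1 u v y - quadQ H2 \<delta> g2 g3 a b \<alpha> \<beta> 0 u v y) * quadh H2 \<delta> g2 g3 a x u \<alpha> + (quadQ H2 \<delta> g2 g3 a b \<alpha> \<beta> x u v 1 - quadQ H2 \<delta> g2 g3 a b \<alpha> \<beta> x u v 0) * quadh H2 \<delta> g2 g3 b u y \<beta> = 0"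
    "(quadQ H2 \<delta> g2 g3 a b \<alpha> \<beta> x 1 v y - quadQ H2 \<delta> g2 g3 a b \<alpha> \<beta> x 0 v y) * quadh H2 \<delta> g2 g3 a x u \<alpha> + (quadQ H2 \<delta> g2 g3 a b \<alpha> \<beta> x u 1 y - quadQ H2 \<delta> g2 g3 a b \<alpha> \<beta> x u 0 y) * quadh H2 \<delta> g2 g3 b x v \<beta> = 0"
proof -
  have d: "DD_H2 \<alpha> \<beta> \<noteq> 0" by (simp add: DD_H2_def)
  have hd: "HD_H2 \<alpha> \<noteq> 0" "HD_H2 \<beta> \<noteq> 0" by (simp_all add: HD_H2_def)
  have qs: "\<And>x u v y. quadQ H2 \<delta> g2 g3 a b \<alpha> \<beta> x u v y = QN_H2 \<delta> \<alpha> \<beta> x u v y / DD_H2 \<alpha> \<beta>"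
    by (rule H2_QE)
  have hs1: "\<And>p q. quadh H2 \<delta> g2 g3 a p q \<alpha> = HN_H2 \<delta> p q \<alpha> / HD_H2 \<alpha>"
    by (rule H2_hE)
  have hs2: "\<And>p q. quadh H2 \<delta> g2 g3 b p q \<beta> = HN_H2 \<delta> p q \<beta> / HD_H2 \<beta>"
    by (rule H2_hE)
  note hs = hs1 hs2
  have qn: "QN_H2 \<delta> \<alpha> \<beta> x u v y = 0" using qz d unfolding qs by simp
  show "quadh H2 \<delta> g2 g3 a x u \<alpha> * quadh H2 \<delta> g2 g3 a v y \<alpha> = quadh H2 \<delta> g2 g3 b x v \<beta> * quadh H2 \<delta> g2 g3 b u y \<beta>"
    unfolding hs by (rule G_I[OF hd(1) hd(2) H2_RI qn])
  show "(quadQ H2 \<delta> g2 g3 a b \<alpha> \<beta> 1 u v y - quadQ H2 \<delta> g2 g3 a b \<alpha> \<beta> 0 u v y) * quadh H2 \<delta> g2 g3 a x u \<alpha> + (quadQ H2 \<delta> g2 g3 a b \<alpha> \<beta> x u v 1 - quadQ H2 \<delta> g2 g3 a b \<alpha> \<beta> x u v 0) * quadh H2 \<delta> g2 g3 b u y \<beta> = 0"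
    unfolding hs qs by (rule G_M[OF d hd(1) hd(2) H2_RM qn])
  show "(quadQ H2 \<delta> g2 g3 a b \<alpha> \<beta> x 1 v y - quadQ H2 \<delta> g2 g3 a b \<alpha> \<beta> x 0 v y) * quadh H2 \<delta> g2 g3 a x u \<alpha> + (quadQ H2 \<delta> g2 g3 a b \<alpha> \<beta> x u 1 y - quadQ H2 \<delta> g2 g3 a b \<alpha> \<beta> x u 0 y) * quadh H2 \<delta> g2 g3 b x v \<beta> = 0"
    unfolding hs qs by (rule G_M[OF d hd(1) hd(2) H2_RN qn])
qed

lemma H3_fin:
  fixes x :: "'a::field_char_0"
  assumes qz: "quadQ H3 \<delta> g2 g3 a b \<alpha> \<beta> x u v y = 0"
  shows "quadh H3 \<delta> g2 g3 a x u \<alpha> * quadh H3 \<delta> g2 g3 a v y \<alpha> = quadh H3 \<delta> g2 g3 b x v \<beta> * quadh H3 \<delta> g2 g3 b u y \<beta>"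
    "(quadQ H3 \<delta> g2 g3 a b \<alpha> \<beta> 1 u v y - quadQ H3 \<delta> g2 g3 a b \<alpha> \<beta> 0 u v y) * quadh H3 \<delta> g2 g3 a x u \<alpha> + (quadQ H3 \<delta> g2 g3 a b \<alpha> \<beta> x u v 1 - quadQ H3 \<delta> g2 g3 a b \<alpha> \<beta> x u v 0) * quadh H3 \<delta> g2 g3 b u y \<beta> = 0"
    "(quadQ H3 \<delta> g2 g3 a b \<alpha> \<beta> x 1 v y - quadQ H3 \<delta> g2 g3 a b \<alpha> \<beta> x 0 v y) * quadh H3 \<delta> g2 g3 a x u \<alpha> + (quadQ H3 \<delta> g2 g3 a b \<alpha> \<beta> x u 1 y - quadQ H3 \<delta> g2 g3 a b \<alpha> \<beta> x u 0 y) * quadh H3 \<delta> g2 g3 b x v \<beta> = 0"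
proof -
  have d: "DD_H3 \<alpha> \<beta> \<noteq> 0" by (simp add: DD_H3_def)
  have hd: "HD_H3 \<alpha> \<noteq> 0" "HD_H3 \<beta> \<noteq> 0" by (simp_all add: HD_H3_def)
  have qs: "\<And>x u v y. quadQ H3 \<delta> g2 g3 a b \<alpha> \<beta> x u v y = QN_H3 \<delta> \<alpha> \<beta> x u v y / DD_H3 \<alpha> \<beta>"
    by (rule H3_QE)
  have hs1: "\<And>p q. quadh H3 \<delta> g2 g3 a p q \<alpha> = HN_H3 \<delta> p q \<alpha> / HD_H3 \<alpha>"
    by (rule H3_hE)
  have hs2: "\<And>p q. quadh H3 \<delta> g2 g3 b p q \<beta> = HN_H3 \<delta> p q \<beta> / HD_H3 \<beta>"
    by (rule H3_hE)
  note hs = hs1 hs2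
  have qn: "QN_H3 \<delta> \<alpha> \<beta> x u v y = 0" using qz d unfolding qs by simp
  show "quadh H3 \<delta> g2 g3 a x u \<alpha> * quadh H3 \<delta> g2 g3 a v y \<alpha> = quadh H3 \<delta> g2 g3 b x v \<beta> * quadh H3 \<delta> g2 g3 b u y \<beta>"
    unfolding hs by (rule G_I[OF hd(1) hd(2) H3_RI qn])
  show "(quadQ H3 \<delta> g2 g3 a b \<alpha> \<beta> 1 u v y - quadQ H3 \<delta> g2 g3 a b \<alpha> \<beta> 0 u v y) * quadh H3 \<delta> g2 g3 a x u \<alpha> + (quadQ H3 \<delta> g2 g3 a b \<alpha> \<beta> x u v 1 - quadQ H3 \<delta> g2 g3 a b \<alpha> \<beta> x u v 0) * quadh H3 \<delta> g2 g3 b u y \<beta> = 0"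
    unfolding hs qs by (rule G_M[OF d hd(1) hd(2) H3_RM qn])
  show "(quadQ H3 \<delta> g2 g3 a b \<alpha> \<beta> x 1 v y - quadQ H3 \<delta> g2 g3 a b \<alpha> \<beta> x 0 v y) * quadh H3 \<delta> g2 g3 a x u \<alpha> + (quadQ H3 \<delta> g2 g3 a b \<alpha> \<beta> x u 1 y - quadQ H3 \<delta> g2 g3 a b \<alpha> \<beta> x u 0 y) * quadh H3 \<delta> g2 g3 b x v \<beta> = 0"
    unfolding hs qs by (rule G_M[OF d hd(1) hd(2) H3_RN qn])
qed

lemma A1_fin:
  fixes x :: "'a::field_char_0"
  assumes c: "\<alpha> \<noteq> 0" "\<beta> \<noteq> 0" and qz: "quadQ A1 \<delta> g2 g3 a b \<alpha> \<beta> x u v y = 0"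
  shows "quadh A1 \<delta> g2 g3 a x u \<alpha> * quadh A1 \<delta> g2 g3 a v y \<alpha> = quadh A1 \<delta> g2 g3 b x v \<beta> * quadh A1 \<delta> g2 g3 b u y \<beta>"
    "(quadQ A1 \<delta> g2 g3 a b \<alpha> \<beta> 1 u v y - quadQ A1 \<delta> g2 g3 a b \<alpha> \<beta> 0 u v y) * quadh A1 \<delta> g2 g3 a x u \<alpha> + (quadQ A1 \<delta> g2 g3 a b \<alpha> \<beta> x u v 1 - quadQ A1 \<delta> g2 g3 a b \<alpha> \<beta> x u v 0) * quadh A1 \<delta> g2 g3 b u y \<beta> = 0"
    "(quadQ A1 \<delta> g2 g3 a b \<alpha> \<beta> x 1 v y - quadQ A1 \<delta> g2 g3 a b \<alpha> \<beta> x 0 v y) * quadh A1 \<delta> g2 g3 a x u \<alpha> + (quadQ A1 \<delta> g2 g3 a b \<alpha> \<beta> x u 1 y - quadQ A1 \<delta> g2 g3 a b \<alpha> \<beta> x u 0 y) * quadh A1 \<delta> g2 g3 b x v \<beta> = 0"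
proof -
  have d: "DD_A1 \<alpha> \<beta> \<noteq> 0" using c by (simp add: DD_A1_def)
  have hd: "HD_A1 \<alpha> \<noteq> 0" "HD_A1 \<beta> \<noteq> 0" using c by (simp_all add: HD_A1_def)
  have qs: "\<And>x u v y. quadQ A1 \<delta> g2 g3 a b \<alpha> \<beta> x u v y = QN_A1 \<delta> \<alpha> \<beta> x u v y / DD_A1 \<alpha> \<beta>"
    by (rule A1_QE; use c in simp)
  have hs1: "\<And>p q. quadh A1 \<delta> g2 g3 a p q \<alpha> = HN_A1 \<delta> p q \<alpha> / HD_A1 \<alpha>"
    by (rule A1_hE; use c in simp)
  have hs2: "\<And>p q. quadh A1 \<delta> g2 g3 b p q \<beta> = HN_A1 \<delta> p q \<beta> / HD_A1 \<beta>"
    by (rule A1_hE; use c in simp)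
  note hs = hs1 hs2
  have qn: "QN_A1 \<delta> \<alpha> \<beta> x u v y = 0" using qz d unfolding qs by simp
  show "quadh A1 \<delta> g2 g3 a x u \<alpha> * quadh A1 \<delta> g2 g3 a v y \<alpha> = quadh A1 \<delta> g2 g3 b x v \<beta> * quadh A1 \<delta> g2 g3 b u y \<beta>"
    unfolding hs by (rule G_I[OF hd(1) hd(2) A1_RI qn])
  show "(quadQ A1 \<delta> g2 g3 a b \<alpha> \<beta> 1 u v y - quadQ A1 \<delta> g2 g3 a b \<alpha> \<beta> 0 u v y) * quadh A1 \<delta> g2 g3 a x u \<alpha> + (quadQ A1 \<delta> g2 g3 a b \<alpha> \<beta> x u v 1 - quadQ A1 \<delta> g2 g3 a b \<alpha> \<beta> x u v 0) * quadh A1 \<delta> g2 g3 b u y \<beta> = 0"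
    unfolding hs qs by (rule G_M[OF d hd(1) hd(2) A1_RM qn])
  show "(quadQ A1 \<delta> g2 g3 a b \<alpha> \<beta> x 1 v y - quadQ A1 \<delta> g2 g3 a b \<alpha> \<beta> x 0 v y) * quadh A1 \<delta> g2 g3 a x u \<alpha> + (quadQ A1 \<delta> g2 g3 a b \<alpha> \<beta> x u 1 y - quadQ A1 \<delta> g2 g3 a b \<alpha> \<beta> x u 0 y) * quadh A1 \<delta> g2 g3 b x v \<beta> = 0"
    unfolding hs qs by (rule G_M[OF d hd(1) hd(2) A1_RN qn])
qed

lemma A2_fin:
  fixes x :: "'a::field_char_0"
  assumes c: "1-\<alpha>^2 \<noteq> 0" "1-\<beta>^2 \<noteq> 0" and qz: "quadQ A2 \<delta> g2 g3 a b \<alpha> \<beta> x u v y = 0"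
  shows "quadh A2 \<delta> g2 g3 a x u \<alpha> * quadh A2 \<delta> g2 g3 a v y \<alpha> = quadh A2 \<delta> g2 g3 b x v \<beta> * quadh A2 \<delta> g2 g3 b u y \<beta>"
    "(quadQ A2 \<delta> g2 g3 a b \<alpha> \<beta> 1 u v y - quadQ A2 \<delta> g2 g3 a b \<alpha> \<beta> 0 u v y) * quadh A2 \<delta> g2 g3 a x u \<alpha> + (quadQ A2 \<delta> g2 g3 a b \<alpha> \<beta> x u v 1 - quadQ A2 \<delta> g2 g3 a b \<alpha> \<beta> x u v 0) * quadh A2 \<delta> g2 g3 b u y \<beta> = 0"
    "(quadQ A2 \<delta> g2 g3 a b \<alpha> \<beta> x 1 v y - quadQ A2 \<delta> g2 g3 a b \<alpha> \<beta> x 0 v y) * quadh A2 \<delta> g2 g3 a x u \<alpha> + (quadQ A2 \<delta> g2 g3 a b \<alpha> \<beta> x u 1 y - quadQ A2 \<delta> g2 g3 a b \<alpha> \<beta> x u 0 y) * quadh A2 \<delta> g2 g3 b x v \<beta> = 0"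
proof -
  have d: "DD_A2 \<alpha> \<beta> \<noteq> 0" using c by (simp add: DD_A2_def)
  have hd: "HD_A2 \<alpha> \<noteq> 0" "HD_A2 \<beta> \<noteq> 0" using c by (simp_all add: HD_A2_def)
  have qs: "\<And>x u v y. quadQ A2 \<delta> g2 g3 a b \<alpha> \<beta> x u v y = QN_A2 \<delta> \<alpha> \<beta> x u v y / DD_A2 \<alpha> \<beta>"
    by (rule A2_QE; use c in simp)
  have hs1: "\<And>p q. quadh A2 \<delta> g2 g3 a p q \<alpha> = HN_A2 \<delta> p q \<alpha> / HD_A2 \<alpha>"
    by (rule A2_hE; use c in simp)
  have hs2: "\<And>p q. quadh A2 \<delta> g2 g3 b p q \<beta> = HN_A2 \<delta> p q \<beta> / HD_A2 \<beta>"
    by (rule A2_hE; use c in simp)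
  note hs = hs1 hs2
  have qn: "QN_A2 \<delta> \<alpha> \<beta> x u v y = 0" using qz d unfolding qs by simp
  show "quadh A2 \<delta> g2 g3 a x u \<alpha> * quadh A2 \<delta> g2 g3 a v y \<alpha> = quadh A2 \<delta> g2 g3 b x v \<beta> * quadh A2 \<delta> g2 g3 b u y \<beta>"
    unfolding hs by (rule G_I[OF hd(1) hd(2) A2_RI qn])
  show "(quadQ A2 \<delta> g2 g3 a b \<alpha> \<beta> 1 u v y - quadQ A2 \<delta> g2 g3 a b \<alpha> \<beta> 0 u v y) * quadh A2 \<delta> g2 g3 a x u \<alpha> + (quadQ A2 \<delta> g2 g3 a b \<alpha> \<beta> x u v 1 - quadQ A2 \<delta> g2 g3 a b \<alpha> \<beta> x u v 0) * quadh A2 \<delta> g2 g3 b u y \<beta> = 0"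
    unfolding hs qs by (rule G_M[OF d hd(1) hd(2) A2_RM qn])
  show "(quadQ A2 \<delta> g2 g3 a b \<alpha> \<beta> x 1 v y - quadQ A2 \<delta> g2 g3 a b \<alpha> \<beta> x 0 v y) * quadh A2 \<delta> g2 g3 a x u \<alpha> + (quadQ A2 \<delta> g2 g3 a b \<alpha> \<beta> x u 1 y - quadQ A2 \<delta> g2 g3 a b \<alpha> \<beta> x u 0 y) * quadh A2 \<delta> g2 g3 b x v \<beta> = 0"
    unfolding hs qs by (rule G_M[OF d hd(1) hd(2) A2_RN qn])
qed

definition AQ :: "'a::field_char_0 \<Rightarrow> 'a \<Rightarrow> 'a \<Rightarrow> 'a \<Rightarrow> 'a \<Rightarrow> 'a \<Rightarrow> 'a \<Rightarrow> 'a \<Rightarrow> 'a" where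
  "AQ g2 g3 \<alpha> \<beta> x u v y = (16 * x * u * v * y * \<alpha> - 16 * x * u * v * y * \<beta> - 16 * x * u * v * \<alpha> * \<beta> + 16 * x * u * v * \<beta>^2 - 16 * x * u * y * \<alpha> * \<beta> + 16 * x * u * y * \<beta>^2 + 16 * x * u * \<alpha> * \<beta>^2 + 16 * x * u * \<beta>^3 - 8 * x * u * \<beta> * g2 - 8 * x * u * g3 - 16 * x * v * y * \<alpha> * \<beta> + 16 * x * v * y * \<beta>^2 - 32 * x * v * \<alpha> * \<beta>^2 + 4 * x * v * \<alpha> * g2 + 4 * x * v * \<beta> * g2 + 8 * x * v * g3 + 16 * x * y * \<alpha> * \<beta>^2 - 16 * x * y * \<beta>^3 + 4 * x * \<alpha> * \<beta> * g2 + 8 * x * \<alpha> * g3 - 4 * x * \<beta>^2 * g2 - 8 * x * \<beta> * g3 - 16 * u * v * y * \<alpha> * \<beta> + 16 * u * v * y * \<beta>^2 + 16 * u * v * \<alpha> * \<beta>^2 - 16 * u * v * \<beta>^3 - 32 * u * y * \<alpha> * \<beta>^2 + 4 * u * y * \<alpha> * g2 + 4 * u * y * \<beta> * g2 + 8 * u * y * g3 + 4 * u * \<alpha> * \<beta> * g2 + 8 * u * \<alpha> * g3 - 4 * u * \<beta>^2 * g2 - 8 * u * \<beta> * g3 + 16 * v * y * \<alpha> * \<beta>^2 + 16 * v * y * \<beta>^3 - 8 * v * y * \<beta> * g2 - 8 * v * y * g3 + 4 * v * \<alpha> * \<beta> * g2 + 8 * v * \<alpha> * g3 - 4 * v * \<beta>^2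 * g2 - 8 * v * \<beta> * g3 + 4 * y * \<alpha> * \<beta> * g2 + 8 * y * \<alpha> * g3 - 4 * y * \<beta>^2 * g2 - 8 * y * \<beta> * g3 + 16 * \<alpha> * \<beta> * g3 + \<alpha> * g2^2 - 16 * \<beta>^2 * g3 - \<beta> * g2^2)"

definition BQ :: "'a::field_char_0 \<Rightarrow> 'a \<Rightarrow> 'a \<Rightarrow> 'a \<Rightarrow> 'a \<Rightarrow> 'a \<Rightarrow> 'a \<Rightarrow> 'a \<Rightarrow> 'a" where
  "BQ g2 g3 \<alpha> \<beta> x u v y = (16 * x * u * v * y * \<alpha> - 16 * x * u * v * y * \<beta> - 16 * x * u * v * \<alpha>^2 + 16 * x * u * v * \<alpha> * \<beta> - 16 * x * u * y * \<alpha>^2 + 16 * x * u * y * \<alpha> * \<beta> + 32 * x * u * \<alpha>^2 * \<beta> - 4 * x * u * \<alpha> * g2 - 4 * x * u * \<beta> * g2 - 8 * x * u * g3 - 16 * x * v * y * \<alpha>^2 + 16 * x * v * y * \<alpha> * \<beta> - 16 * x * v * \<alpha>^3 - 16 * x * v * \<alpha>^2 * \<beta> + 8 * x * v * \<alpha> * g2 + 8 * x * v * g3 + 16 * x * y * \<alpha>^3 - 16 * x * y * \<alpha>^2 * \<beta> + 4 * x * \<alpha>^2 * g2 - 4 * x * \<alpha> * \<beta> * g2 + 8 * x * \<alpha> * g3 - 8 * x * \<beta> * g3 - 16 * u * v * y * \<alpha>^2 + 16 * u * v * y * \<alpha> * \<beta> + 16 * u * v * \<alpha>^3 - 16 * u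 * v * \<alpha>^2 * \<beta> - 16 * u * y * \<alpha>^3 - 16 * u * y * \<alpha>^2 * \<beta> + 8 * u * y * \<alpha> * g2 + 8 * u * y * g3 + 4 * u * \<alpha>^2 * g2 - 4 * u * \<alpha> * \<beta> * g2 + 8 * u * \<alpha> * g3 - 8 * u * \<beta> * g3 + 32 * v * y * \<alpha>^2 * \<beta> - 4 * v * y * \<alpha> * g2 - 4 * v * y * \<beta> * g2 - 8 * v * y * g3 + 4 * v * \<alpha>^2 * g2 - 4 * v * \<alpha> * \<beta> * g2 + 8 * v * \<alpha> * g3 - 8 * v * \<beta> * g3 + 4 * y * \<alpha>^2 * g2 - 4 * y * \<alpha> * \<beta> * g2 + 8 * y * \<alpha> * g3 - 8 * y * \<beta> * g3 + 16 * \<alpha>^2 * g3 - 16 * \<alpha> * \<beta> * g3 + \<alpha> * g2^2 - \<beta> * g2^2)"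

definition HN_Q4 :: "'a::field_char_0 \<Rightarrow> 'a \<Rightarrow> 'a \<Rightarrow> 'a \<Rightarrow> 'a \<Rightarrow> 'a" where
  "HN_Q4 g2 g3 p q A = (4*p*q + 4*A*(p+q) + g2)^2 - 16*(p+q+A)*(4*A*p*q - g3)"

definition W1M :: "'a::field_char_0 \<Rightarrow> 'a \<Rightarrow> 'a \<Rightarrow> 'a \<Rightarrow> 'a \<Rightarrow> 'a \<Rightarrow> 'a \<Rightarrow> 'a \<Rightarrow> 'a" where
  "W1M g2 g3 \<alpha> \<beta> x u v y = (16 * x * u^2 - 32 * x * u * \<alpha> + 16 * x * \<alpha>^2 - 16 * u^2 * \<alpha> - 16 * u * \<alpha>^2 + 4 * u * g2 + 4 * \<alpha> * g2 + 8 * g3)"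

definition W2M :: "'a::field_char_0 \<Rightarrow> 'a \<Rightarrow> 'a \<Rightarrow> 'a \<Rightarrow> 'a \<Rightarrow> 'a \<Rightarrow> 'a \<Rightarrow> 'a \<Rightarrow> 'a" where
  "W2M g2 g3 \<alpha> \<beta> x u v y = (16 * u^2 * y - 16 * u^2 * \<beta> - 32 * u * y * \<beta> - 16 * u * \<beta>^2 + 4 * u * g2 + 16 * y * \<beta>^2 + 4 * \<beta> * g2 + 8 * g3)"

definition W1N :: "'a::field_char_0 \<Rightarrow> 'a \<Rightarrow> 'a \<Rightarrow> 'a \<Rightarrow> 'a \<Rightarrow> 'a \<Rightarrow> 'a \<Rightarrow> 'a \<Rightarrow> 'a" where
  "W1N g2 g3 \<alpha> \<beta> x u v y = (16 * x^2 * u - 16 * x^2 * \<alpha> - 32 * x * u * \<alpha> - 16 * x * \<alpha>^2 + 4 * x * g2 + 16 * u * \<alpha>^2 + 4 * \<alpha> * g2 + 8 * g3)"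

definition W2N :: "'a::field_char_0 \<Rightarrow> 'a \<Rightarrow> 'a \<Rightarrow> 'a \<Rightarrow> 'a \<Rightarrow> 'a \<Rightarrow> 'a \<Rightarrow> 'a \<Rightarrow> 'a" where
  "W2N g2 g3 \<alpha> \<beta> x u v y = (16 * x^2 * v - 16 * x^2 * \<beta> - 32 * x * v * \<beta> - 16 * x * \<beta>^2 + 4 * x * g2 + 16 * v * \<beta>^2 + 4 * \<beta> * g2 + 8 * g3)"

lemma Q4_PI: "(\<alpha>-\<beta>)^2*((4*\<beta>^3 - g2*\<beta> - g3)*(HN_Q4 g2 g3 x u \<alpha>*HN_Q4 g2 g3 v y \<alpha>) - (4*\<alpha>^3 - g2*\<alpha> - g3)*(HN_Q4 g2 g3 x v \<beta>*HN_Q4 g2 g3 u y \<beta>)) = (4*\<beta>^3 - g2*\<beta> - g3)*(BQ g2 g3 \<alpha> \<beta> x u v y)^2 - (4*\<alpha>^3 - g2*\<alpha> - g3)*(AQ g2 g3 \<alpha> \<beta> x u v y)^2"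
  unfolding AQ_def BQ_def HN_Q4_def by algebra

lemma Q4_PM1: "(AQ g2 g3 \<alpha> \<beta> 1 u v y - AQ g2 g3 \<alpha> \<beta> 0 u v y)*HN_Q4 g2 g3 x u \<alpha> + (BQ g2 g3 \<alpha> \<beta> x u v 1 - BQ g2 g3 \<alpha> \<beta> x u v 0)*HN_Q4 g2 g3 u y \<beta> = AQ g2 g3 \<alpha> \<beta> x u v y*W1M g2 g3 \<alpha> \<beta> x u v y + BQ g2 g3 \<alpha> \<beta> x u v y*W2M g2 g3 \<alpha> \<beta> x u v y"
  unfolding AQ_def BQ_def HN_Q4_def W1M_def W2M_def by algebra

lemma Q4_PM2: "(4*\<beta>^3 - g2*\<beta> - g3)*(BQ g2 g3 \<alpha> \<beta> 1 u v y - BQ g2 g3 \<alpha> \<beta> 0 u v y)*HN_Q4 g2 g3 x u \<alpha> + (4*\<alpha>^3 - g2*\<alpha> - g3)*(AQ g2 g3 \<alpha> \<beta> x u v 1 - AQ g2 g3 \<alpha> \<beta> x u v 0)*HN_Q4 g2 g3 u y \<beta> = (4*\<alpha>^3 - g2*\<alpha> - g3)*AQ g2 g3 \<alpha> \<beta> x u v y*W2M g2 g3 \<alpha> \<beta> x u v y + (4*\<beta>^3 - g2*\<beta> - g3)*BQ g2 g3 \<alpha> \<beta> x u v y*W1M g2 g3 \<alpha> \<beta> x u v y"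
  unfolding AQ_def BQ_def HN_Q4_def W1M_def W2M_def by algebra

lemma Q4_PN1: "(AQ g2 g3 \<alpha> \<beta> x 1 v y - AQ g2 g3 \<alpha> \<beta> x 0 v y)*HN_Q4 g2 g3 x u \<alpha> + (BQ g2 g3 \<alpha> \<beta> x u 1 y - BQ g2 g3 \<alpha> \<beta> x u 0 y)*HN_Q4 g2 g3 x v \<beta> = AQ g2 g3 \<alpha> \<beta> x u v y*W1N g2 g3 \<alpha> \<beta> x u v y + BQ g2 g3 \<alpha> \<beta> x u v y*W2N g2 g3 \<alpha> \<beta> x u v y"
  unfolding AQ_def BQ_def HN_Q4_def W1N_def W2N_def by algebra

lemma Q4_PN2: "(4*\<beta>^3 - g2*\<beta> - g3)*(BQ g2 g3 \<alpha> \<beta> x 1 v y - BQ g2 g3 \<alpha> \<beta> x 0 v y)*HN_Q4 g2 g3 x u \<alpha> + (4*\<alpha>^3 - g2*\<alpha> - g3)*(AQ g2 g3 \<alpha> \<beta> x u 1 y - AQ g2 g3 \<alpha> \<beta> x u 0 y)*HN_Q4 g2 g3 x v \<beta> = (4*\<alpha>^3 - g2*\<alpha> - g3)*AQ g2 g3 \<alpha> \<beta> x u v y*W2N g2 g3 \<alpha> \<beta> x u v y + (4*\<beta>^3 - g2*\<beta> - g3)*BQ g2 g3 \<alpha> \<beta> x u v y*W1N g2 g3 \<alpha> \<beta> x u v y"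
  unfolding AQ_def BQ_def HN_Q4_def W1N_def W2N_def by algebra
lemma Q4_QE:
  fixes a :: "'a::field_char_0"
  assumes ha: "a^2 = 4*\<alpha>^3 - g2*\<alpha> - g3" and hb: "b^2 = 4*\<beta>^3 - g2*\<beta> - g3" and ne: "\<alpha> \<noteq> \<beta>"
  shows "quadQ Q4 \<delta> g2 g3 a b \<alpha> \<beta> x u v y = (a * AQ g2 g3 \<alpha> \<beta> x u v y + b * BQ g2 g3 \<alpha> \<beta> x u v y) / (16*(\<alpha>-\<beta>))"
proof -
  have k: "a*b*(a+b) = b*(4*\<alpha>^3 - g2*\<alpha> - g3) + a*(4*\<beta>^3 - g2*\<beta> - g3)"
  proof -
    have "a*b*(a+b) = b*a^2 + a*b^2" by algebra
    then show ?thesis by (simp add: ha hb)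
  qed
  have ne1: "\<alpha> - \<beta> \<noteq> 0" using ne by auto
  define W where "W = a*b*(a+b)/(2*(\<alpha>-\<beta>))"
  have W2: "a*b*(a+b)/(2*(\<beta>-\<alpha>)) = -W"
  proof -
    have "2*(\<beta>-\<alpha>) = -(2*(\<alpha>-\<beta>))" by simp
    then show ?thesis unfolding W_def by (simp only: divide_minus_right)
  qed
  have W1: "a*b*(a+b)/(2*(\<alpha>-\<beta>)) = W" unfolding W_def ..
  have WK: "W*(16*(\<alpha>-\<beta>)) = 8*(b*(4*\<alpha>^3 - g2*\<alpha> - g3) + a*(4*\<beta>^3 - g2*\<beta> - g3))"
    unfolding W_def k[symmetric] using ne1 by (simp add: field_simps)
  have e: "quadQ Q4 \<delta> g2 g3 a b \<alpha> \<beta> x u v y * (16*(\<alpha>-\<beta>)) = a * AQ g2 g3 \<alpha> \<beta> x u v y + b * BQ g2 g3 \<alpha> \<beta> x u v y"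
    unfolding quadQ.simps Let_def W1 W2 AQ_def BQ_def
    using WK by (simp add: field_simps; algebra)
  show ?thesis using e ne1 by (simp add: eq_divide_eq)
qed

lemma Q4_hE:
  fixes s :: "'a::field_char_0"
  shows "quadh Q4 \<delta> g2 g3 s p q A = HN_Q4 g2 g3 p q A / (16 * s)"
proof -
  have num: "(p*q + A*(p+q) + g2/4)^2 - (p+q+A)*(4*A*p*q - g3) = HN_Q4 g2 g3 p q A / 16"
    by (simp add: HN_Q4_def field_simps power2_eq_square; algebra?)
  show ?thesis unfolding quadh.simps num by (simp only: divide_divide_eq_left)
qed

lemma GI4:
  fixes a :: "'a::field_char_0"
  assumes "a \<noteq> 0" "b \<noteq> 0" "a^2 = ra" "b^2 = rb" "c \<noteq> 0"
    "c*(rb*(n1*n2) - ra*(n3*n4)) = rb*B^2 - ra*A^2" "a*A + b*B = 0"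
  shows "n1/(16*a) * (n2/(16*a)) = n3/(16*b) * (n4/(16*b))"
proof -
  have "a*A = -(b*B)" using assms(7) by algebra
  then have "(a*A)^2 = (b*B)^2" by simp
  then have "ra*A^2 = rb*B^2" using assms(3,4) by (simp add: power_mult_distrib)
  then have "c*(rb*(n1*n2) - ra*(n3*n4)) = 0" using assms(6) by simp
  then have "rb*(n1*n2) = ra*(n3*n4)" using assms(5) by simp
  then have "b^2*(n1*n2) = a^2*(n3*n4)" using assms(3,4) by simp
  then show ?thesis using assms(1,2) by (simp add: field_simps power2_eq_square)
qed

lemma GM4:
  fixes a :: "'a::field_char_0"
  assumes "a \<noteq> 0" "b \<noteq> 0" "a^2 = ra" "b^2 = rb" "D \<noteq> 0" "a*A + b*B = 0"
    "(X1-X0)*n1 + (E1-E0)*n4 = A*W1 + B*W2"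
    "rb*(Y1-Y0)*n1 + ra*(C1-C0)*n4 = ra*A*W2 + rb*B*W1"
  shows "((a*X1+b*Y1)/D - (a*X0+b*Y0)/D) * (n1/(16*a)) + ((a*C1+b*E1)/D - (a*C0+b*E0)/D) * (n4/(16*b)) = 0"
proof -
  have num: "(a*(X1-X0)+b*(Y1-Y0))*n1*b + (a*(C1-C0)+b*(E1-E0))*n4*a
      = a*b*((X1-X0)*n1 + (E1-E0)*n4) + b^2*(Y1-Y0)*n1 + a^2*(C1-C0)*n4" by algebra
  also have "\<dots> = a*b*(A*W1 + B*W2) + (rb*(Y1-Y0)*n1 + ra*(C1-C0)*n4)" using assms(3,4,7) by (simp add: algebra_simps)
  also have "\<dots> = a*b*(A*W1 + B*W2) + a^2*A*W2 + b^2*B*W1" using assms(3,4,8) by simp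
  also have "\<dots> = (a*A + b*B)*(b*W1 + a*W2)" by algebra
  also have "\<dots> = 0" using assms(6) by simp
  finally have z: "(a*(X1-X0)+b*(Y1-Y0))*n1*b + (a*(C1-C0)+b*(E1-E0))*n4*a = 0" .
  have "((a*X1+b*Y1)/D - (a*X0+b*Y0)/D) * (n1/(16*a)) + ((a*C1+b*E1)/D - (a*C0+b*E0)/D) * (n4/(16*b))
      = ((a*(X1-X0)+b*(Y1-Y0))*n1*b + (a*(C1-C0)+b*(E1-E0))*n4*a) / (16*D*a*b)"
    using assms(1,2,5) by (simp add: field_simps)
  then show ?thesis using z by simp
qed

lemma Q4_fin:
  fixes x :: "'a::field_char_0"
  assumes ha: "a^2 = r_Q4 g2 g3 \<alpha>" and hb: "b^2 = r_Q4 g2 g3 \<beta>" and a0: "a \<noteq> 0" and b0: "b \<noteq> 0"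
    and ne: "\<alpha> \<noteq> \<beta>" and qz: "quadQ Q4 \<delta> g2 g3 a b \<alpha> \<beta> x u v y = 0"
  shows "quadh Q4 \<delta> g2 g3 a x u \<alpha> * quadh Q4 \<delta> g2 g3 a v y \<alpha> = quadh Q4 \<delta> g2 g3 b x v \<beta> * quadh Q4 \<delta> g2 g3 b u y \<beta>"
    "(quadQ Q4 \<delta> g2 g3 a b \<alpha> \<beta> 1 u v y - quadQ Q4 \<delta> g2 g3 a b \<alpha> \<beta> 0 u v y) * quadh Q4 \<delta> g2 g3 a x u \<alpha> + (quadQ Q4 \<delta> g2 g3 a b \<alpha> \<beta> x u v 1 - quadQ Q4 \<delta> g2 g3 a b \<alpha> \<beta> x u v 0) * quadh Q4 \<delta> g2 g3 b u y \<beta> = 0"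
    "(quadQ Q4 \<delta> g2 g3 a b \<alpha> \<beta> x 1 v y - quadQ Q4 \<delta> g2 g3 a b \<alpha> \<beta> x 0 v y) * quadh Q4 \<delta> g2 g3 a x u \<alpha> + (quadQ Q4 \<delta> g2 g3 a b \<alpha> \<beta> x u 1 y - quadQ Q4 \<delta> g2 g3 a b \<alpha> \<beta> x u 0 y) * quadh Q4 \<delta> g2 g3 b x v \<beta> = 0"
proof -
  have ha': "a^2 = 4*\<alpha>^3 - g2*\<alpha> - g3" and hb': "b^2 = 4*\<beta>^3 - g2*\<beta> - g3"
    using ha hb by (simp_all add: r_Q4_def)
  have d: "16*(\<alpha>-\<beta>) \<noteq> 0" using ne by simp
  have c: "(\<alpha>-\<beta>)^2 \<noteq> 0" using ne by simp
  note qs = Q4_QE[OF ha' hb' ne]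
  have qn: "a * AQ g2 g3 \<alpha> \<beta> x u v y + b * BQ g2 g3 \<alpha> \<beta> x u v y = 0"
    using qz d unfolding qs by simp
  show "quadh Q4 \<delta> g2 g3 a x u \<alpha> * quadh Q4 \<delta> g2 g3 a v y \<alpha> = quadh Q4 \<delta> g2 g3 b x v \<beta> * quadh Q4 \<delta> g2 g3 b u y \<beta>"
    unfolding Q4_hE by (rule GI4[OF a0 b0 ha' hb' c Q4_PI qn])
  show "(quadQ Q4 \<delta> g2 g3 a b \<alpha> \<beta> 1 u v y - quadQ Q4 \<delta> g2 g3 a b \<alpha> \<beta> 0 u v y) * quadh Q4 \<delta> g2 g3 a x u \<alpha> + (quadQ Q4 \<delta> g2 g3 a b \<alpha> \<beta> x u v 1 - quadQ Q4 \<delta> g2 g3 a b \<alpha> \<beta> x u v 0) * quadh Q4 \<delta> g2 g3 b u y \<beta> = 0"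
    unfolding Q4_hE qs by (rule GM4[OF a0 b0 ha' hb' d qn Q4_PM1 Q4_PM2])
  show "(quadQ Q4 \<delta> g2 g3 a b \<alpha> \<beta> x 1 v y - quadQ Q4 \<delta> g2 g3 a b \<alpha> \<beta> x 0 v y) * quadh Q4 \<delta> g2 g3 a x u \<alpha> + (quadQ Q4 \<delta> g2 g3 a b \<alpha> \<beta> x u 1 y - quadQ Q4 \<delta> g2 g3 a b \<alpha> \<beta> x u 0 y) * quadh Q4 \<delta> g2 g3 b x v \<beta> = 0"
    unfolding Q4_hE qs by (rule GM4[OF a0 b0 ha' hb' d qn Q4_PN1 Q4_PN2])
qed
lemma deriv_aff:
  fixes f :: "'a::real_normed_field \<Rightarrow> 'a"
  assumes "\<And>t. f t = c + t * d"
  shows "deriv f z = d"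
proof -
  have "f = (\<lambda>t. c + t * d)" using assms by auto
  moreover have "((\<lambda>t. c + t * d) has_field_derivative d) (at z)"
    by (auto intro!: derivative_eq_intros)
  ultimately show ?thesis by (simp add: DERIV_imp_deriv)
qed

lemma aff1: "quadQ E \<delta> g2 g3 a b \<alpha> \<beta> t u v y = quadQ E \<delta> g2 g3 a b \<alpha> \<beta> 0 u v y + t * (quadQ E \<delta> g2 g3 a b \<alpha> \<beta> 1 u v y - quadQ E \<delta> g2 g3 a b \<alpha> \<beta> 0 u v y)"
  by (cases E) (simp_all add: Let_def algebra_simps)
lemma aff2: "quadQ E \<delta> g2 g3 a b \<alpha> \<beta> x t v y = quadQ E \<delta> g2 g3 a b \<alpha> \<beta> x 0 v y + t * (quadQ E \<delta> g2 g3 a b \<alpha> \<beta> x 1 v y - quadQ E \<delta> g2 g3 a b \<alpha> \<beta> x 0 v y)"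
  by (cases E) (simp_all add: Let_def algebra_simps)
lemma aff3: "quadQ E \<delta> g2 g3 a b \<alpha> \<beta> x u t y = quadQ E \<delta> g2 g3 a b \<alpha> \<beta> x u 0 y + t * (quadQ E \<delta> g2 g3 a b \<alpha> \<beta> x u 1 y - quadQ E \<delta> g2 g3 a b \<alpha> \<beta> x u 0 y)"
  by (cases E) (simp_all add: Let_def algebra_simps)
lemma aff4: "quadQ E \<delta> g2 g3 a b \<alpha> \<beta> x u v t = quadQ E \<delta> g2 g3 a b \<alpha> \<beta> x u v 0 + t * (quadQ E \<delta> g2 g3 a b \<alpha> \<beta> x u v 1 - quadQ E \<delta> g2 g3 a b \<alpha> \<beta> x u v 0)"
  by (cases E) (simp_all add: Let_def algebra_simps)

lemma G_final:
  fixes p :: "'a::field"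
  assumes "p*hA + s*hD = 0" "q*hA + r*hC = 0" "dx*du = hA" "du*dy = hD" "dx*dv = hC" "dx \<noteq> 0" "du \<noteq> 0"
  shows "p*dx + q*du + r*dv + s*dy = 0"
proof -
  have "(p*dx + q*du + r*dv + s*dy)*(dx*du) = dx*(p*(dx*du) + s*(du*dy)) + du*(q*(dx*du) + r*(dx*dv))"
    by algebra
  also have "\<dots> = 0" using assms(1-5) by simp
  finally show ?thesis using assms(6,7) by simp
qed

lemma all_fin:
  fixes x :: "'a::field_char_0"
  assumes adm: "quad_admissible E \<delta> g2 g3 a b \<alpha> \<beta>" and qz: "quadQ E \<delta> g2 g3 a b \<alpha> \<beta> x u v y = 0"
  shows "quadh E \<delta> g2 g3 a x u \<alpha> * quadh E \<delta> g2 g3 a v y \<alpha> = quadh E \<delta> g2 g3 b x v \<beta> * quadh E \<delta> g2 g3 b u y \<beta>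
    \<and> (quadQ E \<delta> g2 g3 a b \<alpha> \<beta> 1 u v y - quadQ E \<delta> g2 g3 a b \<alpha> \<beta> 0 u v y) * quadh E \<delta> g2 g3 a x u \<alpha> + (quadQ E \<delta> g2 g3 a b \<alpha> \<beta> x u v 1 - quadQ E \<delta> g2 g3 a b \<alpha> \<beta> x u v 0) * quadh E \<delta> g2 g3 b u y \<beta> = 0
    \<and> (quadQ E \<delta> g2 g3 a b \<alpha> \<beta> x 1 v y - quadQ E \<delta> g2 g3 a b \<alpha> \<beta> x 0 v y) * quadh E \<delta> g2 g3 a x u \<alpha> + (quadQ E \<delta> g2 g3 a b \<alpha> \<beta> x u 1 y - quadQ E \<delta> g2 g3 a b \<alpha> \<beta> x u 0 y) * quadh E \<delta> g2 g3 b x v \<beta> = 0"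
proof (cases E)
  case Q1
  have c: "\<alpha> \<noteq> 0" "\<beta> \<noteq> 0" using adm Q1 by auto
  show ?thesis unfolding Q1 using Q1_fin[OF c qz[unfolded Q1]] by blast
next
  case Q2
  have c: "\<alpha> \<noteq> 0" "\<beta> \<noteq> 0" using adm Q2 by auto
  show ?thesis unfolding Q2 using Q2_fin[OF c qz[unfolded Q2]] by blast
next
  case Q3
  have c: "\<alpha> \<noteq> 0" "1-\<alpha>^2 \<noteq> 0" "\<beta> \<noteq> 0" "1-\<beta>^2 \<noteq> 0" using adm Q3 by auto
  show ?thesis unfolding Q3 using Q3_fin[OF c qz[unfolded Q3]] by blast
next
  case Q4
  have c: "a^2 = r_Q4 g2 g3 \<alpha>" "b^2 = r_Q4 g2 g3 \<beta>" "a \<noteq> 0" "b \<noteq> 0" "\<alpha> \<noteq> \<beta>" using adm Q4 by auto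
  show ?thesis unfolding Q4 using Q4_fin[OF c qz[unfolded Q4]] by blast
next
  case H2
  show ?thesis unfolding H2 using H2_fin[OF qz[unfolded H2]] by blast
next
  case H3
  show ?thesis unfolding H3 using H3_fin[OF qz[unfolded H3]] by blast
next
  case A1
  have c: "\<alpha> \<noteq> 0" "\<beta> \<noteq> 0" using adm A1 by auto
  show ?thesis unfolding A1 using A1_fin[OF c qz[unfolded A1]] by blast
next
  case A2
  have c: "1-\<alpha>^2 \<noteq> 0" "1-\<beta>^2 \<noteq> 0" using adm A2 by auto
  show ?thesis unfolding A2 using A2_fin[OF c qz[unfolded A2]] by blast
qed

theorem proposition10:
  fixes E :: quad_eq and \<delta> g2 g3 a b \<alpha> \<beta> :: "'a::real_normed_field"
  assumes adm: "quad_admissible E \<delta> g2 g3 a b \<alpha> \<beta>"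
  shows
    \<comment> \<open>(i) Q = 0 implies the consistency condition of the system\<close>
    "(\<forall>x u v y :: 'a. quadQ E \<delta> g2 g3 a b \<alpha> \<beta> x u v y = 0 \<longrightarrow>
        quadh E \<delta> g2 g3 a x u \<alpha> * quadh E \<delta> g2 g3 a v y \<alpha>
          = quadh E \<delta> g2 g3 b x v \<beta> * quadh E \<delta> g2 g3 b u y \<beta>)
     \<and>
    \<comment> \<open>(ii) Q = 0 is compatible with the system along (non-degenerate) solutions\<close>
     (\<forall>(x :: 'a \<Rightarrow> 'a) u v y \<xi> dx du dv dy.
        (x has_field_derivative dx) (at \<xi>) \<and> (u has_field_derivative du) (at \<xi>) \<and>
        (v has_field_derivative dv) (at \<xi>) \<and> (y has_field_derivative dy) (at \<xi>) \<and>
        dx * du = quadh E \<delta> g2 g3 a (x \<xi>) (u \<xi>) \<alpha> \<and>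
        du * dy = quadh E \<delta> g2 g3 b (u \<xi>) (y \<xi>) \<beta> \<and>
        dx * dv = quadh E \<delta> g2 g3 b (x \<xi>) (v \<xi>) \<beta> \<and>
        dv * dy = quadh E \<delta> g2 g3 a (v \<xi>) (y \<xi>) \<alpha> \<and>
        dx \<noteq> 0 \<and> du \<noteq> 0 \<and>
        quadQ E \<delta> g2 g3 a b \<alpha> \<beta> (x \<xi>) (u \<xi>) (v \<xi>) (y \<xi>) = 0
        \<longrightarrow>
        deriv (\<lambda>t. quadQ E \<delta> g2 g3 a b \<alpha> \<beta> t (u \<xi>) (v \<xi>) (y \<xi>)) (x \<xi>) * dx
        + deriv (\<lambda>t. quadQ E \<delta> g2 g3 a b \<alpha> \<beta> (x \<xi>) t (v \<xi>) (y \<xi>)) (u \<xi>) * du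
        + deriv (\<lambda>t. quadQ E \<delta> g2 g3 a b \<alpha> \<beta> (x \<xi>) (u \<xi>) t (y \<xi>)) (v \<xi>) * dv
        + deriv (\<lambda>t. quadQ E \<delta> g2 g3 a b \<alpha> \<beta> (x \<xi>) (u \<xi>) (v \<xi>) t) (y \<xi>) * dy = 0)"
proof (intro conjI allI impI)
  fix x u v y :: 'a
  assume "quadQ E \<delta> g2 g3 a b \<alpha> \<beta> x u v y = 0"
  then show "quadh E \<delta> g2 g3 a x u \<alpha> * quadh E \<delta> g2 g3 a v y \<alpha> = quadh E \<delta> g2 g3 b x v \<beta> * quadh E \<delta> g2 g3 b u y \<beta>"
    using all_fin[OF adm] by blast
next
  fix x u v y :: "'a \<Rightarrow> 'a" and \<xi> dx du dv dy :: 'a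
  assume H: "(x has_field_derivative dx) (at \<xi>) \<and> (u has_field_derivative du) (at \<xi>) \<and>
        (v has_field_derivative dv) (at \<xi>) \<and> (y has_field_derivative dy) (at \<xi>) \<and>
        dx * du = quadh E \<delta> g2 g3 a (x \<xi>) (u \<xi>) \<alpha> \<and>
        du * dy = quadh E \<delta> g2 g3 b (u \<xi>) (y \<xi>) \<beta> \<and>
        dx * dv = quadh E \<delta> g2 g3 b (x \<xi>) (v \<xi>) \<beta> \<and>
        dv * dy = quadh E \<delta> g2 g3 a (v \<xi>) (y \<xi>) \<alpha> \<and>
        dx \<noteq> 0 \<and> du \<noteq> 0 \<and>
        quadQ E \<delta> g2 g3 a b \<alpha> \<beta> (x \<xi>) (u \<xi>) (v \<xi>) (y \<xi>) = 0"
  have F: "(quadQ E \<delta> g2 g3 a b \<alpha> \<beta> 1 (u \<xi>) (v \<xi>) (y \<xi>) - quadQ E \<delta> g2 g3 a b \<alpha> \<beta> 0 (u \<xi>) (v \<xi>) (y \<xi>)) * quadh E \<delta> g2 g3 a (x \<xi>) (u \<xi>) \<alpha> + (quadQ E \<delta> g2 g3 a b \<alpha> \<beta> (x \<xi>) (u \<xi>) (v \<xi>) 1 - quadQ E \<delta> g2 g3 a b \<alpha> \<beta> (x \<xi>) (u \<xi>) (v \<xi>) 0) * quadh E \<delta> g2 g3 b (u \<xi>) (y \<xi>) \<beta> = 0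
    \<and> (quadQ E \<delta> g2 g3 a b \<alpha> \<beta> (x \<xi>) 1 (v \<xi>) (y \<xi>) - quadQ E \<delta> g2 g3 a b \<alpha> \<beta> (x \<xi>) 0 (v \<xi>) (y \<xi>)) * quadh E \<delta> g2 g3 a (x \<xi>) (u \<xi>) \<alpha> + (quadQ E \<delta> g2 g3 a b \<alpha> \<beta> (x \<xi>) (u \<xi>) 1 (y \<xi>) - quadQ E \<delta> g2 g3 a b \<alpha> \<beta> (x \<xi>) (u \<xi>) 0 (y \<xi>)) * quadh E \<delta> g2 g3 b (x \<xi>) (v \<xi>) \<beta> = 0"
    using all_fin[OF adm] H by blast
  have D1: "deriv (\<lambda>t. quadQ E \<delta> g2 g3 a b \<alpha> \<beta> t (u \<xi>) (v \<xi>) (y \<xi>)) (x \<xi>) = quadQ E \<delta> g2 g3 a b \<alpha> \<beta> 1 (u \<xi>) (v \<xi>) (y \<xi>) - quadQ E \<delta> g2 g3 a b \<alpha> \<beta> 0 (u \<xi>) (v \<xi>) (y \<xi>)"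
    by (rule deriv_aff) (rule aff1)
  have D2: "deriv (\<lambda>t. quadQ E \<delta> g2 g3 a b \<alpha> \<beta> (x \<xi>) t (v \<xi>) (y \<xi>)) (u \<xi>) = quadQ E \<delta> g2 g3 a b \<alpha> \<beta> (x \<xi>) 1 (v \<xi>) (y \<xi>) - quadQ E \<delta> g2 g3 a b \<alpha> \<beta> (x \<xi>) 0 (v \<xi>) (y \<xi>)"
    by (rule deriv_aff) (rule aff2)
  have D3: "deriv (\<lambda>t. quadQ E \<delta> g2 g3 a b \<alpha> \<beta> (x \<xi>) (u \<xi>) t (y \<xi>)) (v \<xi>) = quadQ E \<delta> g2 g3 a b \<alpha> \<beta> (x \<xi>) (u \<xi>) 1 (y \<xi>) - quadQ E \<delta> g2 g3 a b \<alpha> \<beta> (x \<xi>) (u \<xi>) 0 (y \<xi>)"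
    by (rule deriv_aff) (rule aff3)
  have D4: "deriv (\<lambda>t. quadQ E \<delta> g2 g3 a b \<alpha> \<beta> (x \<xi>) (u \<xi>) (v \<xi>) t) (y \<xi>) = quadQ E \<delta> g2 g3 a b \<alpha> \<beta> (x \<xi>) (u \<xi>) (v \<xi>) 1 - quadQ E \<delta> g2 g3 a b \<alpha> \<beta> (x \<xi>) (u \<xi>) (v \<xi>) 0"
    by (rule deriv_aff) (rule aff4)
  show "deriv (\<lambda>t. quadQ E \<delta> g2 g3 a b \<alpha> \<beta> t (u \<xi>) (v \<xi>) (y \<xi>)) (x \<xi>) * dx
        + deriv (\<lambda>t. quadQ E \<delta> g2 g3 a b \<alpha> \<beta> (x \<xi>) t (v \<xi>) (y \<xi>)) (u \<xi>) * du
        + deriv (\<lambda>t. quadQ E \<delta> g2 g3 a b \<alpha> \<beta> (x \<xi>) (u \<xi>) t (y \<xi>)) (v \<xi>) * dv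
        + deriv (\<lambda>t. quadQ E \<delta> g2 g3 a b \<alpha> \<beta> (x \<xi>) (u \<xi>) (v \<xi>) t) (y \<xi>) * dy = 0"
    unfolding D1 D2 D3 D4
    by (rule G_final[where hA="quadh E \<delta> g2 g3 a (x \<xi>) (u \<xi>) \<alpha>" and hC="quadh E \<delta> g2 g3 b (x \<xi>) (v \<xi>) \<beta>" and hD="quadh E \<delta> g2 g3 b (u \<xi>) (y \<xi>) \<beta>"]) (use F H in auto)
qed

end
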